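(* If two patterns $\pi$ and $\pi'$ of length $k$ are super-strongly c-forest-Wilf equivalent, then $\pi'=\pi$ or $\pi'=\overline\pi$.
   Context: A pattern of length $k$ is a permutation of $[k]$; its complement is $\overline\pi=(k+1-\pi(1))\cdots(k+1-\pi(k))$. Rooted forests are unordered, each component having a distinguished root. A consecutive instance of $\pi$ in a labeled rooted forest is a downward path of $k$ vertices $v_1,\dots,v_k$ ($v_i$ the parent of $v_{i+1}$) whose labels are in the same relative order as $\pi$. Patterns $\pi,\pi'$ of length $k$ are super-strongly c-forest-Wilf equivalent if for every unlabeled rooted forest $F$ on $n$ vertices and every set $S$ of downward paths of $k$ vertices in $F$, the number of ways to label the vertices of $F$ with distinct labels from $[n]$ such that $S$ is exactly the set of consecutive instances of $\pi$ equals the number of such labelings for which $S$ is exactly the set of consecutive instances of $\pi'$. *)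

theory Defs
  imports Main "HOL-Library.FuncSet"
begin

definition is_pattern :: "nat \<Rightarrow> nat list \<Rightarrow> bool" where
  "is_pattern k p \<longleftrightarrow> length p = k \<and> set p = {1..k}"

definition complement :: "nat \<Rightarrow> nat list \<Rightarrow> nat list" where
  "complement k p = map (\<lambda>x. k + 1 - x) p"

text \<open>An unlabeled rooted forest on the vertex set {0..<n}, given by a parent map:
  roots have parent None, every other vertex has a parent in {0..<n}, and the
  child-parent relation is well-founded (no cycles).\<close>
definition rooted_forest :: "nat \<Rightarrow> (nat \<Rightarrow> nat option) \<Rightarrow> bool" where
  "rooted_forest n par \<longleftrightarrow>
     (\<forall>v<n. \<forall>u. par v = Some u \<longrightarrow> u < n) \<and>
     wf {(u, v). v < n \<and> par v = Some u}"

definition downward_path :: "nat \<Rightarrow> (nat \<Rightarrow> nat option) \<Rightarrow> nat \<Rightarrow> nat list \<Rightarrow> bool" where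
  "downward_path n par k vs \<longleftrightarrow> length vs = k \<and> set vs \<subseteq> {0..<n} \<and>
     (\<forall>i. i + 1 < k \<longrightarrow> par (vs ! (i + 1)) = Some (vs ! i))"

definition labelings :: "nat \<Rightarrow> (nat \<Rightarrow> nat) set" where
  "labelings n = {L. L \<in> {0..<n} \<rightarrow>\<^sub>E {1..n} \<and> inj_on L {0..<n}}"

definition same_order :: "nat list \<Rightarrow> nat list \<Rightarrow> bool" where
  "same_order xs p \<longleftrightarrow> length xs = length p \<and>
     (\<forall>i<length p. \<forall>j<length p. xs ! i < xs ! j \<longleftrightarrow> p ! i < p ! j)"

definition consec_instances ::
  "nat \<Rightarrow> (nat \<Rightarrow> nat option) \<Rightarrow> (nat \<Rightarrow> nat) \<Rightarrow> nat list \<Rightarrow> nat list set" where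
  "consec_instances n par L p =
     {vs. downward_path n par (length p) vs \<and> same_order (map L vs) p}"

definition super_strongly_cfw_equiv :: "nat \<Rightarrow> nat list \<Rightarrow> nat list \<Rightarrow> bool" where
  "super_strongly_cfw_equiv k p p' \<longleftrightarrow>
     (\<forall>n par S. rooted_forest n par \<longrightarrow> S \<subseteq> {vs. downward_path n par k vs} \<longrightarrow>
        card {L \<in> labelings n. consec_instances n par L p = S} =
        card {L \<in> labelings n. consec_instances n par L p' = S})"

end

theory Submission
  imports Defs
begin


definition lext :: "nat set \<Rightarrow> (nat \<times> nat) set \<Rightarrow> (nat \<Rightarrow> nat) set" where
  "lext V R = {L. L \<in> V \<rightarrow>\<^sub>E {1..card V} \<and> inj_on L V \<and>
      (\<forall>u v. (u,v) \<in> R \<longrightarrow> u \<in> V \<longrightarrow> v \<in> V \<longrightarrow> L u < L v)}"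

lemma lext_finite: "finite V \<Longrightarrow> finite (lext V R)"
proof -
  assume "finite V"
  have "lext V R \<subseteq> V \<rightarrow>\<^sub>E {1..card V}" unfolding lext_def by auto
  moreover have "finite (V \<rightarrow>\<^sub>E {1..card V})" using \<open>finite V\<close> by (intro finite_PiE) auto
  ultimately show ?thesis by (rule finite_subset)
qed

lemma lext_image: assumes "finite V" "L \<in> lext V R" shows "L ` V = {1..card V}"
proof -
  have s: "L ` V \<subseteq> {1..card V}" and i: "inj_on L V" using assms(2) unfolding lext_def by auto
  have "card (L ` V) = card {1..card V}" using card_image[OF i] by simp
  then show ?thesis using s by (intro card_subset_eq) auto
qed

lemma lext_empty: "card (lext {} R) = 1"
proof -
  have "lext {} R = {\<lambda>_. undefined}" unfolding lext_def by auto
  then show ?thesis by simp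
qed

definition maxs :: "nat set \<Rightarrow> (nat \<times> nat) set \<Rightarrow> nat set" where
  "maxs V R = {v\<in>V. \<forall>w\<in>V. (v,w) \<notin> R}"

lemma lext_slice:
  assumes fin: "finite V" and vm: "v \<in> maxs V R"
  shows "card {L \<in> lext V R. L v = card V} = card (lext (V - {v}) R)"
proof -
  define N where "N = card V"
  have vV: "v \<in> V" and vmax: "\<And>w. w \<in> V \<Longrightarrow> (v,w) \<notin> R" using vm unfolding maxs_def by auto
  have N1: "N \<ge> 1" using fin vV unfolding N_def by (metis One_nat_def Suc_leI card_gt_0_iff empty_iff)
  have cV: "card (V - {v}) = N - 1" using fin vV unfolding N_def by simp
  have "bij_betw (\<lambda>L. L(v := undefined)) {L \<in> lext V R. L v = N} (lext (V - {v}) R)"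
  proof (rule bij_betw_byWitness[where f' = "\<lambda>L. L(v := N)"])
    show "\<forall>L\<in>{L \<in> lext V R. L v = N}. (L(v := undefined))(v := N) = L" by auto
    show "\<forall>L\<in>lext (V - {v}) R. (L(v := N))(v := undefined) = L"
      unfolding lext_def by (auto simp: PiE_def extensional_def fun_eq_iff)
    show "(\<lambda>L. L(v := undefined)) ` {L \<in> lext V R. L v = N} \<subseteq> lext (V - {v}) R"
    proof
      fix L' assume "L' \<in> (\<lambda>L. L(v := undefined)) ` {L \<in> lext V R. L v = N}"
      then obtain L where L: "L \<in> lext V R" "L v = N" and L': "L' = L(v := undefined)" by auto
      have P: "L \<in> V \<rightarrow>\<^sub>E {1..N}" and I: "inj_on L V"
        and C: "\<And>a b. (a,b) \<in> R \<Longrightarrow> a \<in> V \<Longrightarrow> b \<in> V \<Longrightarrow> L a < L b"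
        using L(1) unfolding lext_def N_def by auto
      have ne: "L u \<noteq> N" if "u \<in> V - {v}" for u using I L(2) vV that by (metis DiffE inj_on_def singletonI)
      have "L' u \<in> {1..N - 1}" if "u \<in> V - {v}" for u
      proof -
        have "L u \<in> {1..N}" using P that by auto
        then show ?thesis using ne[OF that] that unfolding L' by auto
      qed
      moreover have "L' u = undefined" if "u \<notin> V - {v}" for u
        using P that unfolding L' by (cases "u = v") (auto simp: PiE_def extensional_def)
      ultimately have "L' \<in> (V - {v}) \<rightarrow>\<^sub>E {1..N - 1}" by (auto simp: PiE_def extensional_def Pi_def)
      moreover have "inj_on L' (V - {v})" using I unfolding L' by (auto simp: inj_on_def)
      moreover have "\<And>a b. (a,b) \<in> R \<Longrightarrow> a \<in> V - {v} \<Longrightarrow> b \<in> V - {v} \<Longrightarrow> L' a < L' b"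
        using C unfolding L' by auto
      ultimately show "L' \<in> lext (V - {v}) R" unfolding lext_def cV by auto
    qed
    show "(\<lambda>L. L(v := N)) ` lext (V - {v}) R \<subseteq> {L \<in> lext V R. L v = N}"
    proof
      fix L assume "L \<in> (\<lambda>L. L(v := N)) ` lext (V - {v}) R"
      then obtain L' where L': "L' \<in> lext (V - {v}) R" and L: "L = L'(v := N)" by auto
      have P: "L' \<in> (V - {v}) \<rightarrow>\<^sub>E {1..N - 1}" and I: "inj_on L' (V - {v})"
        and C: "\<And>a b. (a,b) \<in> R \<Longrightarrow> a \<in> V - {v} \<Longrightarrow> b \<in> V - {v} \<Longrightarrow> L' a < L' b"
        using L' unfolding lext_def cV by auto
      have lt: "\<And>u. u \<in> V - {v} \<Longrightarrow> L' u < N" using P N1 by (auto simp: PiE_def Pi_def)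
      have "L \<in> V \<rightarrow>\<^sub>E {1..N}" using P N1 vV unfolding L by (auto simp: PiE_def extensional_def Pi_def)
      moreover have "inj_on L V" unfolding L inj_on_def
      proof (intro ballI impI)
        fix x y assume "x \<in> V" "y \<in> V" "(L'(v := N)) x = (L'(v := N)) y"
        then show "x = y"
        proof (cases "x = v"; cases "y = v")
          assume "x \<noteq> v" "y \<noteq> v" then show ?thesis using \<open>x \<in> V\<close> \<open>y \<in> V\<close> \<open>(L'(v := N)) x = (L'(v := N)) y\<close> I
            by (simp add: inj_on_def)
        next
          assume "x = v" "y \<noteq> v" then show ?thesis using \<open>y \<in> V\<close> \<open>(L'(v := N)) x = (L'(v := N)) y\<close> lt[of y] by simp
        next
          assume "x \<noteq> v" "y = v" then show ?thesis using \<open>x \<in> V\<close> \<open>(L'(v := N)) x = (L'(v := N)) y\<close> lt[of x] by simp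
        qed simp
      qed
      moreover have "\<And>a b. (a,b) \<in> R \<Longrightarrow> a \<in> V \<Longrightarrow> b \<in> V \<Longrightarrow> L a < L b"
      proof -
        fix a b assume ab: "(a,b) \<in> R" "a \<in> V" "b \<in> V"
        have "a \<noteq> v" using vmax ab by auto
        then show "L a < L b" using ab C lt unfolding L by (cases "b = v") auto
      qed
      ultimately show "L \<in> {L \<in> lext V R. L v = N}" unfolding lext_def N_def L by auto
    qed
  qed
  then show ?thesis unfolding N_def by (rule bij_betw_same_card)
qed

lemma lext_rec:
  assumes fin: "finite V" and ne: "V \<noteq> {}"
  shows "card (lext V R) = (\<Sum>v\<in>maxs V R. card (lext (V - {v}) R))"
proof -
  define N where "N = card V"
  have N1: "N \<ge> 1" using fin ne unfolding N_def by (simp add: Suc_leI card_gt_0_iff)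
  have eq: "lext V R = (\<Union>v\<in>maxs V R. {L \<in> lext V R. L v = N})"
  proof (rule set_eqI, rule iffI)
    fix L assume L: "L \<in> lext V R"
    have "N \<in> L ` V" using lext_image[OF fin L] N1 unfolding N_def by auto
    then obtain v where v: "v \<in> V" "L v = N" by auto
    have "v \<in> maxs V R"
    proof -
      have "\<And>w. w \<in> V \<Longrightarrow> (v,w) \<notin> R"
      proof
        fix w assume w: "w \<in> V" "(v,w) \<in> R"
        then have "L v < L w" using L v unfolding lext_def by auto
        moreover have "L w \<le> N" using L w unfolding lext_def N_def by (auto simp: PiE_def Pi_def)
        ultimately show False using v by simp
      qed
      then show ?thesis using v unfolding maxs_def by auto
    qed
    then show "L \<in> (\<Union>v\<in>maxs V R. {L \<in> lext V R. L v = N})" using L v by auto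
  qed auto
  have cu: "card (\<Union>v\<in>maxs V R. {L \<in> lext V R. L v = N}) = (\<Sum>v\<in>maxs V R. card {L \<in> lext V R. L v = N})"
  proof (rule card_UN_disjoint)
    show "finite (maxs V R)" using fin unfolding maxs_def by auto
    show "\<forall>v\<in>maxs V R. finite {L \<in> lext V R. L v = N}" using lext_finite[OF fin] by auto
    show "\<forall>v\<in>maxs V R. \<forall>w\<in>maxs V R. v \<noteq> w \<longrightarrow> {L \<in> lext V R. L v = N} \<inter> {L \<in> lext V R. L w = N} = {}"
    proof (intro ballI impI)
      fix v w assume vw: "v \<in> maxs V R" "w \<in> maxs V R" "v \<noteq> w"
      show "{L \<in> lext V R. L v = N} \<inter> {L \<in> lext V R. L w = N} = {}"
      proof (rule ccontr)
        assume "{L \<in> lext V R. L v = N} \<inter> {L \<in> lext V R. L w = N} \<noteq> {}"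
        then obtain L where "L \<in> lext V R" "L v = N" "L w = N" by blast
        then have "inj_on L V" "L v = L w" unfolding lext_def by auto
        then show False using vw unfolding maxs_def inj_on_def by blast
      qed
    qed
  qed
  have "card (lext V R) = (\<Sum>v\<in>maxs V R. card {L \<in> lext V R. L v = N})"
    by (rule trans[OF arg_cong[where f=card, OF eq] cu])
  also have "\<dots> = (\<Sum>v\<in>maxs V R. card (lext (V - {v}) R))"
    using lext_slice[OF fin] unfolding N_def by (intro sum.cong) auto
  finally show ?thesis .
qed


lemma lext_cong: "(\<And>u v. u \<in> V \<Longrightarrow> v \<in> V \<Longrightarrow> ((u,v) \<in> R \<longleftrightarrow> (u,v) \<in> R')) \<Longrightarrow> lext V R = lext V R'"
  unfolding lext_def by (intro Collect_cong conj_cong refl) (meson)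

lemma maxs_exists:
  fixes h :: "nat \<Rightarrow> nat"
  assumes fin: "finite V" and ne: "V \<noteq> {}" and hR: "\<And>u v. (u,v) \<in> R \<Longrightarrow> u \<in> V \<Longrightarrow> v \<in> V \<Longrightarrow> h u < h v"
  obtains v where "v \<in> maxs V R" "\<And>w. w \<in> V \<Longrightarrow> h w \<le> h v"
proof -
  have "Max (h ` V) \<in> h ` V" using fin ne by (intro Max_in) auto
  then obtain v where v: "v \<in> V" "h v = Max (h ` V)" by auto
  have le: "\<And>w. w \<in> V \<Longrightarrow> h w \<le> h v" using v fin by simp
  have "v \<in> maxs V R" unfolding maxs_def
  proof (intro CollectI conjI ballI)
    show "v \<in> V" using v by simp
    fix w assume "w \<in> V"
    show "(v,w) \<notin> R"
    proof
      assume "(v,w) \<in> R"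
      then have "h v < h w" using hR v(1) \<open>w \<in> V\<close> by blast
      then show False using le[OF \<open>w \<in> V\<close>] by simp
    qed
  qed
  then show ?thesis using le that by blast
qed

lemma lext_pos:
  fixes h :: "nat \<Rightarrow> nat"
  assumes "finite V" and "\<And>u v. (u,v) \<in> R \<Longrightarrow> u \<in> V \<Longrightarrow> v \<in> V \<Longrightarrow> h u < h v"
  shows "card (lext V R) \<ge> 1"
  using assms
proof (induction "card V" arbitrary: V)
  case 0
  have "V = {}" using "0.hyps" "0.prems"(1) by simp
  then show ?case using lext_empty by simp
next
  case (Suc n)
  have ne: "V \<noteq> {}" using Suc.hyps(2) by auto
  obtain v where v: "v \<in> maxs V R" by (rule maxs_exists[OF Suc.prems(1) ne Suc.prems(2)])
  have vV: "v \<in> V" using v unfolding maxs_def by auto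
  have "card (lext (V - {v}) R) \<ge> 1"
  proof (rule Suc.hyps(1))
    show "n = card (V - {v})" using Suc.hyps(2) Suc.prems(1) vV by simp
    show "finite (V - {v})" using Suc.prems(1) by simp
    show "\<And>u w. (u,w) \<in> R \<Longrightarrow> u \<in> V - {v} \<Longrightarrow> w \<in> V - {v} \<Longrightarrow> h u < h w"
      using Suc.prems(2) by blast
  qed
  also have "card (lext (V - {v}) R) \<le> (\<Sum>v\<in>maxs V R. card (lext (V - {v}) R))"
  proof (rule member_le_sum)
    show "v \<in> maxs V R" by (rule v)
    show "finite (maxs V R)" using Suc.prems(1) unfolding maxs_def by simp
  qed simp
  also have "\<dots> = card (lext V R)" using lext_rec[OF Suc.prems(1) ne] by (rule sym)
  finally show ?case .
qed

lemma lext_chain: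
  fixes h :: "nat \<Rightarrow> nat"
  assumes "finite V" and "\<And>u v. (u,v) \<in> R \<Longrightarrow> u \<in> V \<Longrightarrow> v \<in> V \<Longrightarrow> h u < h v"
    and "\<And>u w. u \<in> V \<Longrightarrow> w \<in> V \<Longrightarrow> u \<noteq> w \<Longrightarrow> (u,w) \<in> R \<or> (w,u) \<in> R"
  shows "card (lext V R) = 1"
  using assms
proof (induction "card V" arbitrary: V)
  case 0
  have "V = {}" using "0.hyps" "0.prems"(1) by simp
  then show ?case using lext_empty by simp
next
  case (Suc n)
  have ne: "V \<noteq> {}" using Suc.hyps(2) by auto
  obtain v where v: "v \<in> maxs V R" by (rule maxs_exists[OF Suc.prems(1) ne Suc.prems(2)])
  have vV: "v \<in> V" using v unfolding maxs_def by auto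
  have ms: "maxs V R = {v}"
  proof
    show "{v} \<subseteq> maxs V R" using v by auto
    show "maxs V R \<subseteq> {v}"
    proof
      fix u assume u: "u \<in> maxs V R"
      show "u \<in> {v}"
      proof (rule ccontr)
        assume "u \<notin> {v}"
        then have "u \<noteq> v" by simp
        moreover have "u \<in> V" using u unfolding maxs_def by simp
        ultimately have "(u,v) \<in> R \<or> (v,u) \<in> R" using Suc.prems(3) vV by blast
        then show False using u v unfolding maxs_def by auto
      qed
    qed
  qed
  have "card (lext (V - {v}) R) = 1"
  proof (rule Suc.hyps(1))
    show "n = card (V - {v})" using Suc.hyps(2) Suc.prems(1) vV by simp
    show "finite (V - {v})" using Suc.prems(1) by simp
    show "\<And>u w. (u,w) \<in> R \<Longrightarrow> u \<in> V - {v} \<Longrightarrow> w \<in> V - {v} \<Longrightarrow> h u < h w"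
      using Suc.prems(2) by blast
    show "\<And>u w. u \<in> V - {v} \<Longrightarrow> w \<in> V - {v} \<Longrightarrow> u \<noteq> w \<Longrightarrow> (u,w) \<in> R \<or> (w,u) \<in> R"
      using Suc.prems(3) by blast
  qed
  then show ?case using lext_rec[OF Suc.prems(1) ne] ms by simp
qed

lemma maxs_union:
  assumes "\<And>u v. (u,v) \<in> R \<Longrightarrow> \<not> (u \<in> A \<and> v \<in> B) \<and> \<not> (u \<in> B \<and> v \<in> A)"
  shows "maxs (A \<union> B) R = maxs A R \<union> maxs B R"
  using assms unfolding maxs_def by blast

lemma lext_shuffle:
  assumes "finite A" "finite B" "A \<inter> B = {}"
    and "\<And>u v. (u,v) \<in> R \<Longrightarrow> \<not> (u \<in> A \<and> v \<in> B) \<and> \<not> (u \<in> B \<and> v \<in> A)"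
  shows "card (lext (A \<union> B) R) = (card A + card B choose card A) * card (lext A R) * card (lext B R)"
  using assms
proof (induction "card A + card B" arbitrary: A B)
  case 0
  have "A = {}" "B = {}" using "0.hyps" "0.prems"(1,2) by auto
  then show ?case using lext_empty by simp
next
  case (Suc n)
  show ?case
  proof (cases "A = {}")
    case True
    then show ?thesis using lext_empty by simp
  next
    case Ane: False
    show ?thesis
    proof (cases "B = {}")
      case True
      then show ?thesis using lext_empty by simp
    next
      case Bne: False
      define a where "a = card A"
      define b where "b = card B"
      have a0: "a \<ge> 1" using Ane Suc.prems(1) unfolding a_def by (simp add: Suc_leI card_gt_0_iff)
      have b0: "b \<ge> 1" using Bne Suc.prems(2) unfolding b_def by (simp add: Suc_leI card_gt_0_iff)
      have finU: "finite (A \<union> B)" using Suc.prems by auto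
      have dis: "maxs A R \<inter> maxs B R = {}" using Suc.prems(3) unfolding maxs_def by auto
      have fmA: "finite (maxs A R)" and fmB: "finite (maxs B R)" using Suc.prems unfolding maxs_def by auto
      have IA: "card (lext ((A - {v}) \<union> B) R) = (a - 1 + b choose (a - 1)) * card (lext (A - {v}) R) * card (lext B R)"
        if v: "v \<in> maxs A R" for v
      proof -
        have vA: "v \<in> A" using v unfolding maxs_def by auto
        have cA: "card (A - {v}) = a - 1" using vA Suc.prems(1) unfolding a_def by simp
        have "card (lext ((A - {v}) \<union> B) R) = (card (A - {v}) + card B choose card (A - {v})) * card (lext (A - {v}) R) * card (lext B R)"
        proof (rule Suc.hyps(1))
          show "n = card (A - {v}) + card B" using cA Suc.hyps(2) a0 unfolding a_def by simp
          show "finite (A - {v})" "finite B" using Suc.prems(1,2) by auto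
          show "(A - {v}) \<inter> B = {}" using Suc.prems(3) by auto
          show "\<And>u w. (u,w) \<in> R \<Longrightarrow> \<not> (u \<in> A - {v} \<and> w \<in> B) \<and> \<not> (u \<in> B \<and> w \<in> A - {v})"
            using Suc.prems(4) by blast
        qed
        then show ?thesis using cA unfolding b_def by simp
      qed
      have IB: "card (lext (A \<union> (B - {v})) R) = (a + (b - 1) choose a) * card (lext A R) * card (lext (B - {v}) R)"
        if v: "v \<in> maxs B R" for v
      proof -
        have vB: "v \<in> B" using v unfolding maxs_def by auto
        have cB: "card (B - {v}) = b - 1" using vB Suc.prems(2) unfolding b_def by simp
        have "card (lext (A \<union> (B - {v})) R) = (card A + card (B - {v}) choose card A) * card (lext A R) * card (lext (B - {v}) R)"
        proof (rule Suc.hyps(1))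
          show "n = card A + card (B - {v})" using cB Suc.hyps(2) b0 unfolding b_def by simp
          show "finite A" "finite (B - {v})" using Suc.prems(1,2) by auto
          show "A \<inter> (B - {v}) = {}" using Suc.prems(3) by auto
          show "\<And>u w. (u,w) \<in> R \<Longrightarrow> \<not> (u \<in> A \<and> w \<in> B - {v}) \<and> \<not> (u \<in> B - {v} \<and> w \<in> A)"
            using Suc.prems(4) by blast
        qed
        then show ?thesis using cB unfolding a_def by simp
      qed
      have "card (lext (A \<union> B) R) = (\<Sum>v\<in>maxs A R \<union> maxs B R. card (lext (A \<union> B - {v}) R))"
      proof -
        have "maxs (A \<union> B) R = maxs A R \<union> maxs B R" by (rule maxs_union) (rule Suc.prems(4))
        moreover have "A \<union> B \<noteq> {}" using Ane by simp
        ultimately show ?thesis using lext_rec[OF finU, of R] by simp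
      qed
      also have "\<dots> = (\<Sum>v\<in>maxs A R. card (lext (A \<union> B - {v}) R)) + (\<Sum>v\<in>maxs B R. card (lext (A \<union> B - {v}) R))"
        by (rule sum.union_disjoint[OF fmA fmB dis])
      also have "(\<Sum>v\<in>maxs A R. card (lext (A \<union> B - {v}) R)) = (\<Sum>v\<in>maxs A R. (a - 1 + b choose (a - 1)) * card (lext (A - {v}) R) * card (lext B R))"
      proof (rule sum.cong[OF refl])
        fix v assume v: "v \<in> maxs A R"
        then have "A \<union> B - {v} = (A - {v}) \<union> B" using Suc.prems(3) unfolding maxs_def by auto
        then show "card (lext (A \<union> B - {v}) R) = (a - 1 + b choose (a - 1)) * card (lext (A - {v}) R) * card (lext B R)"
          using IA[OF v] by simp
      qed
      also have "\<dots> = (a - 1 + b choose (a - 1)) * card (lext A R) * card (lext B R)"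
        using lext_rec[OF Suc.prems(1) Ane] by (simp add: sum_distrib_left sum_distrib_right)
      also have "(\<Sum>v\<in>maxs B R. card (lext (A \<union> B - {v}) R)) = (\<Sum>v\<in>maxs B R. (a + (b - 1) choose a) * card (lext A R) * card (lext (B - {v}) R))"
      proof (rule sum.cong[OF refl])
        fix v assume v: "v \<in> maxs B R"
        then have "A \<union> B - {v} = A \<union> (B - {v})" using Suc.prems(3) unfolding maxs_def by auto
        then show "card (lext (A \<union> B - {v}) R) = (a + (b - 1) choose a) * card (lext A R) * card (lext (B - {v}) R)"
          using IB[OF v] by simp
      qed
      also have "\<dots> = (a + (b - 1) choose a) * card (lext A R) * card (lext B R)"
        using lext_rec[OF Suc.prems(2) Bne] by (simp add: sum_distrib_left sum_distrib_right)
      also have "(a - 1 + b choose (a - 1)) * card (lext A R) * card (lext B R) + (a + (b - 1) choose a) * card (lext A R) * card (lext B R)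
           = (a + b choose a) * card (lext A R) * card (lext B R)"
      proof -
        obtain a' where a': "a = Suc a'" using a0 by (cases a) auto
        obtain b' where b': "b = Suc b'" using b0 by (cases b) auto
        have "a + b choose a = (a' + b' + 1 choose a') + (a' + b' + 1 choose Suc a')"
          unfolding a' b' by simp
        moreover have "a - 1 + b = a' + b' + 1" "a + (b - 1) = a' + b' + 1" "a - 1 = a'" using a' b' by auto
        ultimately show ?thesis by (simp add: algebra_simps)
      qed
      finally show ?thesis unfolding a_def b_def .
    qed
  qed
qed

lemma lext_series:
  assumes fL: "finite Lo" and fU: "finite Up" and xL: "x \<notin> Lo" and xU: "x \<notin> Up" and LU: "Lo \<inter> Up = {}"
    and lx: "\<And>l. l \<in> Lo \<Longrightarrow> (l,x) \<in> R" and xu: "\<And>u. u \<in> Up \<Longrightarrow> (x,u) \<in> R"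
    and xw: "\<And>w. (x,w) \<in> R \<Longrightarrow> w \<in> Lo \<union> {x} \<union> Up \<Longrightarrow> w \<in> Up"
    and uw: "\<And>u w. (u,w) \<in> R \<Longrightarrow> u \<in> Up \<Longrightarrow> w \<in> Lo \<union> {x} \<union> Up \<Longrightarrow> w \<in> Up"
  shows "card (lext (Lo \<union> {x} \<union> Up) R) = card (lext Lo R) * card (lext Up R)"
  using fU xU LU xu xw uw
proof (induction "card Up" arbitrary: Up)
  case 0
  have U: "Up = {}" using "0.hyps" "0.prems"(1) by simp
  have ms: "maxs (Lo \<union> {x}) R = {x}"
  proof -
    have "x \<in> maxs (Lo \<union> {x}) R" unfolding maxs_def
    proof (intro CollectI conjI ballI)
      fix w assume "w \<in> Lo \<union> {x}"
      then have "w \<in> Lo \<union> {x} \<union> Up" by blast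
      then show "(x, w) \<notin> R" using "0.prems"(5)[of w] U by auto
    qed simp
    moreover have "\<And>v. v \<in> maxs (Lo \<union> {x}) R \<Longrightarrow> v = x" unfolding maxs_def using lx by auto
    ultimately show ?thesis by auto
  qed
  have "card (lext (Lo \<union> {x}) R) = (\<Sum>v\<in>maxs (Lo \<union> {x}) R. card (lext (Lo \<union> {x} - {v}) R))"
    by (rule lext_rec) (use fL in auto)
  also have "\<dots> = card (lext (Lo \<union> {x} - {x}) R)" using ms by simp
  also have "Lo \<union> {x} - {x} = Lo" using xL by auto
  finally show ?case using U lext_empty by simp
next
  case (Suc n)
  have Une: "Up \<noteq> {}" using Suc.hyps(2) by auto
  define V where "V = Lo \<union> {x} \<union> Up"
  have finV: "finite V" using fL Suc.prems unfolding V_def by auto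
  have ms: "maxs V R = maxs Up R"
  proof
    show "maxs V R \<subseteq> maxs Up R"
    proof
      fix v assume v: "v \<in> maxs V R"
      obtain u where u: "u \<in> Up" using Une by auto
      have "v \<notin> Lo" using v lx unfolding maxs_def V_def by auto
      moreover have "v \<noteq> x" using v Suc.prems(4)[OF u] u unfolding maxs_def V_def by auto
      ultimately have "v \<in> Up" using v unfolding maxs_def V_def by auto
      then show "v \<in> maxs Up R" using v unfolding maxs_def V_def by auto
    qed
    show "maxs Up R \<subseteq> maxs V R"
      using Suc.prems(6) unfolding maxs_def V_def by blast
  qed
  have "card (lext V R) = (\<Sum>v\<in>maxs Up R. card (lext (V - {v}) R))"
    using lext_rec[OF finV] ms unfolding V_def by simp
  also have "\<dots> = (\<Sum>v\<in>maxs Up R. card (lext Lo R) * card (lext (Up - {v}) R))"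
  proof (rule sum.cong[OF refl])
    fix v assume v: "v \<in> maxs Up R"
    then have vU: "v \<in> Up" unfolding maxs_def by auto
    have "V - {v} = Lo \<union> {x} \<union> (Up - {v})" unfolding V_def using vU Suc.prems(2,3) by auto
    moreover have "card (lext (Lo \<union> {x} \<union> (Up - {v})) R) = card (lext Lo R) * card (lext (Up - {v}) R)"
    proof (rule Suc.hyps(1))
      show "n = card (Up - {v})" using Suc.hyps(2) Suc.prems(1) vU by simp
      show "finite (Up - {v})" using Suc.prems(1) by simp
      show "x \<notin> Up - {v}" using Suc.prems(2) by simp
      show "Lo \<inter> (Up - {v}) = {}" using Suc.prems(3) by auto
      show "\<And>u. u \<in> Up - {v} \<Longrightarrow> (x,u) \<in> R" using Suc.prems(4) by blast
      show "\<And>w. (x,w) \<in> R \<Longrightarrow> w \<in> Lo \<union> {x} \<union> (Up - {v}) \<Longrightarrow> w \<in> Up - {v}"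
        using Suc.prems(5) Suc.prems(2,3) vU by blast
      show "\<And>u w. (u,w) \<in> R \<Longrightarrow> u \<in> Up - {v} \<Longrightarrow> w \<in> Lo \<union> {x} \<union> (Up - {v}) \<Longrightarrow> w \<in> Up - {v}"
        using Suc.prems(6) Suc.prems(2,3) vU by blast
    qed
    ultimately show "card (lext (V - {v}) R) = card (lext Lo R) * card (lext (Up - {v}) R)" by simp
  qed
  also have "\<dots> = card (lext Lo R) * card (lext Up R)"
    using lext_rec[OF Suc.prems(1) Une] by (simp add: sum_distrib_left)
  finally show ?case unfolding V_def .
qed



lemma finite_labelings: "finite (labelings n)"
proof -
  have "labelings n \<subseteq> {0..<n} \<rightarrow>\<^sub>E {1..n}" unfolding labelings_def by auto
  moreover have "finite ({0..<n} \<rightarrow>\<^sub>E {1..n})" by (intro finite_PiE) auto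
  ultimately show ?thesis by (rule finite_subset)
qed

lemma finite_paths: "finite {vs. downward_path n par k vs}"
proof -
  have "{vs. downward_path n par k vs} \<subseteq> {vs. set vs \<subseteq> {0..<n} \<and> length vs = k}"
    unfolding downward_path_def by auto
  moreover have "finite {vs. set vs \<subseteq> {0..<n} \<and> length vs = k}"
    by (rule finite_lists_length_eq) simp
  ultimately show ?thesis by (rule finite_subset)
qed

lemma req_card_sum:
  assumes "length q = k"
  shows "card {L \<in> labelings n. X \<subseteq> consec_instances n par L q} =
    (\<Sum>S\<in>{S. S \<subseteq> {vs. downward_path n par k vs} \<and> X \<subseteq> S}. card {L \<in> labelings n. consec_instances n par L q = S})"
proof -
  define Ps where "Ps = {vs. downward_path n par k vs}"
  define Ss where "Ss = {S. S \<subseteq> Ps \<and> X \<subseteq> S}"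
  have fS: "finite Ss"
  proof -
    have "Ss \<subseteq> Pow Ps" unfolding Ss_def by auto
    moreover have "finite (Pow Ps)" using finite_paths unfolding Ps_def by simp
    ultimately show ?thesis by (rule finite_subset)
  qed
  have sub: "consec_instances n par L q \<subseteq> Ps" for L
    unfolding consec_instances_def Ps_def using assms by auto
  have dec: "{L \<in> labelings n. X \<subseteq> consec_instances n par L q} = (\<Union>S\<in>Ss. {L \<in> labelings n. consec_instances n par L q = S})"
    unfolding Ss_def using sub by auto
  have "card (\<Union>S\<in>Ss. {L \<in> labelings n. consec_instances n par L q = S}) = (\<Sum>S\<in>Ss. card {L \<in> labelings n. consec_instances n par L q = S})"
  proof (rule card_UN_disjoint)
    show "finite Ss" by (rule fS)
    show "\<forall>S\<in>Ss. finite {L \<in> labelings n. consec_instances n par L q = S}" using finite_labelings by auto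
    show "\<forall>S\<in>Ss. \<forall>T\<in>Ss. S \<noteq> T \<longrightarrow> {L \<in> labelings n. consec_instances n par L q = S} \<inter> {L \<in> labelings n. consec_instances n par L q = T} = {}"
      by blast
  qed
  then show ?thesis unfolding dec Ss_def Ps_def .
qed

lemma req_eq:
  assumes ss: "super_strongly_cfw_equiv k p p'" and lp: "length p = k" and lp': "length p' = k"
    and rf: "rooted_forest n par"
  shows "card {L \<in> labelings n. X \<subseteq> consec_instances n par L p} = card {L \<in> labelings n. X \<subseteq> consec_instances n par L p'}"
  unfolding req_card_sum[OF lp] req_card_sum[OF lp']
proof (rule sum.cong[OF refl])
  fix S assume "S \<in> {S. S \<subseteq> {vs. downward_path n par k vs} \<and> X \<subseteq> S}"
  then have "S \<subseteq> {vs. downward_path n par k vs}" by simp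
  then show "card {L \<in> labelings n. consec_instances n par L p = S} = card {L \<in> labelings n. consec_instances n par L p' = S}"
    using ss rf unfolding super_strongly_cfw_equiv_def by blast
qed

definition cL :: "nat \<Rightarrow> (nat \<Rightarrow> nat) \<Rightarrow> nat \<Rightarrow> nat" where
  "cL n L = (\<lambda>v. if v < n then Suc n - L v else undefined)"

lemma cL_lab: assumes "L \<in> labelings n" shows "cL n L \<in> labelings n"
proof -
  have P: "L \<in> {0..<n} \<rightarrow>\<^sub>E {1..n}" and I: "inj_on L {0..<n}" using assms unfolding labelings_def by auto
  have "cL n L \<in> {0..<n} \<rightarrow>\<^sub>E {1..n}" using P unfolding cL_def by (auto simp: PiE_def Pi_def extensional_def)
  moreover have "inj_on (cL n L) {0..<n}"
  proof (rule inj_onI)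
    fix x y assume xy: "x \<in> {0..<n}" "y \<in> {0..<n}" "cL n L x = cL n L y"
    have "L x \<in> {1..n}" "L y \<in> {1..n}" using P xy by auto
    then have "L x = L y" using xy unfolding cL_def by auto
    then show "x = y" using I xy by (auto simp: inj_on_def)
  qed
  ultimately show ?thesis unfolding labelings_def by auto
qed

lemma cL_inv: assumes "L \<in> labelings n" shows "cL n (cL n L) = L"
proof
  fix v
  have P: "L \<in> {0..<n} \<rightarrow>\<^sub>E {1..n}" using assms unfolding labelings_def by auto
  show "cL n (cL n L) v = L v"
  proof (cases "v < n")
    case True
    then have "L v \<in> {1..n}" using P by auto
    then show ?thesis using True unfolding cL_def by auto
  next
    case False
    then show ?thesis using P unfolding cL_def by (auto simp: PiE_def extensional_def)
  qed
qed

lemma pattern_vals: assumes "is_pattern k q" "i < k" shows "q ! i \<in> {1..k}"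
  using assms unfolding is_pattern_def by (metis nth_mem)

lemma ci_comp:
  assumes pq: "is_pattern k q" and L: "L \<in> labelings n"
  shows "consec_instances n par (cL n L) (complement k q) = consec_instances n par L q"
proof -
  have lq: "length q = k" using pq unfolding is_pattern_def by simp
  have lc: "length (complement k q) = k" using lq unfolding complement_def by simp
  have P: "L \<in> {0..<n} \<rightarrow>\<^sub>E {1..n}" using L unfolding labelings_def by auto
  have key: "same_order (map (cL n L) vs) (complement k q) \<longleftrightarrow> same_order (map L vs) q"
    if vs: "length vs = k" "set vs \<subseteq> {0..<n}" for vs
  proof -
    have lv2: "vs ! i < n" if "i < k" for i
    proof -
      have "vs ! i \<in> set vs" using vs(1) that by simp
      then show ?thesis using vs(2) by auto
    qed
    have lv: "L (vs ! i) \<in> {1..n}" "vs ! i < n" if "i < k" for i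
      using P lv2[OF that] by auto
    have A: "(map (cL n L) vs ! i < map (cL n L) vs ! j) \<longleftrightarrow> L (vs ! j) < L (vs ! i)" if "i < k" "j < k" for i j
      using lv[OF that(1)] lv[OF that(2)] that vs(1) unfolding cL_def by auto
    have C: "(complement k q ! i < complement k q ! j) \<longleftrightarrow> q ! j < q ! i" if "i < k" "j < k" for i j
      using pattern_vals[OF pq that(1)] pattern_vals[OF pq that(2)] that lq unfolding complement_def by auto
    have M: "map L vs ! i = L (vs ! i)" if "i < k" for i using that vs(1) by simp
    have "same_order (map (cL n L) vs) (complement k q) \<longleftrightarrow> (\<forall>i<k. \<forall>j<k. (L (vs!j) < L (vs!i) \<longleftrightarrow> q!j < q!i))"
      unfolding same_order_def lc using A C vs(1) by simp
    also have "\<dots> \<longleftrightarrow> (\<forall>i<k. \<forall>j<k. (L (vs!i) < L (vs!j) \<longleftrightarrow> q!i < q!j))" by blast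
    also have "\<dots> \<longleftrightarrow> same_order (map L vs) q" unfolding same_order_def lq using M vs(1) by simp
    finally show ?thesis .
  qed
  show ?thesis
    unfolding consec_instances_def lc lq using key unfolding downward_path_def by auto
qed

lemma card_comp:
  assumes pq: "is_pattern k q"
  shows "card {L \<in> labelings n. consec_instances n par L (complement k q) = S} = card {L \<in> labelings n. consec_instances n par L q = S}"
proof -
  have "bij_betw (cL n) {L \<in> labelings n. consec_instances n par L q = S} {L \<in> labelings n. consec_instances n par L (complement k q) = S}"
  proof (rule bij_betw_byWitness[where f' = "cL n"])
    show "\<forall>a\<in>{L \<in> labelings n. consec_instances n par L q = S}. cL n (cL n a) = a"
    proof
      fix a assume "a \<in> {L \<in> labelings n. consec_instances n par L q = S}"
      then have "a \<in> labelings n" by simp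
      then show "cL n (cL n a) = a" by (rule cL_inv)
    qed
    show "\<forall>a\<in>{L \<in> labelings n. consec_instances n par L (complement k q) = S}. cL n (cL n a) = a"
    proof
      fix a assume "a \<in> {L \<in> labelings n. consec_instances n par L (complement k q) = S}"
      then have "a \<in> labelings n" by simp
      then show "cL n (cL n a) = a" by (rule cL_inv)
    qed
    show "cL n ` {L \<in> labelings n. consec_instances n par L q = S} \<subseteq> {L \<in> labelings n. consec_instances n par L (complement k q) = S}"
    proof
      fix L assume "L \<in> cL n ` {L \<in> labelings n. consec_instances n par L q = S}"
      then obtain L0 where L0: "L0 \<in> labelings n" "consec_instances n par L0 q = S" and L: "L = cL n L0" by auto
      show "L \<in> {L \<in> labelings n. consec_instances n par L (complement k q) = S}"
        using cL_lab[OF L0(1)] ci_comp[OF pq L0(1)] L0(2) L by simp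
    qed
    show "cL n ` {L \<in> labelings n. consec_instances n par L (complement k q) = S} \<subseteq> {L \<in> labelings n. consec_instances n par L q = S}"
    proof
      fix L assume "L \<in> cL n ` {L \<in> labelings n. consec_instances n par L (complement k q) = S}"
      then obtain L0 where L0: "L0 \<in> labelings n" "consec_instances n par L0 (complement k q) = S" and L: "L = cL n L0" by auto
      have "L \<in> labelings n" using cL_lab[OF L0(1)] L by simp
      moreover have "cL n L = L0" using cL_inv[OF L0(1)] L by simp
      ultimately show "L \<in> {L \<in> labelings n. consec_instances n par L q = S}"
        using ci_comp[OF pq \<open>L \<in> labelings n\<close>] L0(2) by simp
    qed
  qed
  then have "card {L \<in> labelings n. consec_instances n par L q = S} = card {L \<in> labelings n. consec_instances n par L (complement k q) = S}"
    by (rule bij_betw_same_card)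
  then show ?thesis by simp
qed

lemma ss_comp_left:
  assumes "is_pattern k p" "super_strongly_cfw_equiv k p p'"
  shows "super_strongly_cfw_equiv k (complement k p) p'"
  unfolding super_strongly_cfw_equiv_def
proof (intro allI impI)
  fix n par S assume a: "rooted_forest n par" "S \<subseteq> {vs. downward_path n par k vs}"
  have "card {L \<in> labelings n. consec_instances n par L p = S} = card {L \<in> labelings n. consec_instances n par L p' = S}"
    using assms(2) a unfolding super_strongly_cfw_equiv_def by blast
  then show "card {L \<in> labelings n. consec_instances n par L (complement k p) = S} = card {L \<in> labelings n. consec_instances n par L p' = S}"
    using card_comp[OF assms(1), of n par S] by simp
qed

lemma ss_sym: "super_strongly_cfw_equiv k p p' \<Longrightarrow> super_strongly_cfw_equiv k p' p"
  unfolding super_strongly_cfw_equiv_def by (simp add: eq_commute)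

lemma comp_pattern: assumes "is_pattern k q" shows "is_pattern k (complement k q)"
proof -
  have "set (complement k q) = (\<lambda>x. k + 1 - x) ` {1..k}" using assms unfolding is_pattern_def complement_def by simp
  also have "\<dots> = {1..k}"
  proof
    show "(\<lambda>x. k + 1 - x) ` {1..k} \<subseteq> {1..k}" by auto
    show "{1..k} \<subseteq> (\<lambda>x. k + 1 - x) ` {1..k}"
    proof
      fix y assume "y \<in> {1..k}"
      then have "y = k + 1 - (k + 1 - y)" "k + 1 - y \<in> {1..k}" by auto
      then show "y \<in> (\<lambda>x. k + 1 - x) ` {1..k}" by blast
    qed
  qed
  finally show ?thesis using assms unfolding is_pattern_def complement_def by simp
qed

lemma comp_comp: assumes "is_pattern k q" shows "complement k (complement k q) = q"
proof -
  have "\<forall>x\<in>set q. k + 1 - (k + 1 - x) = x" using assms unfolding is_pattern_def by auto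
  then show ?thesis unfolding complement_def by (simp add: map_idI)
qed



definition pairsR :: "nat list set \<Rightarrow> nat list \<Rightarrow> (nat \<times> nat) set" where
  "pairsR X q = {(vs ! a, vs ! b) | vs a b. vs \<in> X \<and> a < length q \<and> b < length q \<and> q ! a < q ! b}"

lemma so_iff:
  assumes "length vs = k" "length q = k" "distinct q"
  shows "same_order (map L vs) q \<longleftrightarrow> (\<forall>a<k. \<forall>b<k. q ! a < q ! b \<longrightarrow> L (vs ! a) < L (vs ! b))"
proof
  assume "same_order (map L vs) q"
  then show "\<forall>a<k. \<forall>b<k. q ! a < q ! b \<longrightarrow> L (vs ! a) < L (vs ! b)"
    unfolding same_order_def using assms by auto
next
  assume H: "\<forall>a<k. \<forall>b<k. q ! a < q ! b \<longrightarrow> L (vs ! a) < L (vs ! b)"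
  have "(L (vs ! a) < L (vs ! b)) \<longleftrightarrow> q ! a < q ! b" if ab: "a < k" "b < k" for a b
  proof
    assume "q ! a < q ! b" then show "L (vs ! a) < L (vs ! b)" using H ab by blast
  next
    assume l: "L (vs ! a) < L (vs ! b)"
    show "q ! a < q ! b"
    proof (rule ccontr)
      assume "\<not> q ! a < q ! b"
      moreover have "a \<noteq> b" using l by auto
      moreover have "q ! a \<noteq> q ! b" using \<open>a \<noteq> b\<close> assms(2,3) ab by (simp add: nth_eq_iff_index_eq)
      ultimately have "q ! b < q ! a" by simp
      then have "L (vs ! b) < L (vs ! a)" using H ab by blast
      then show False using l by simp
    qed
  qed
  then show "same_order (map L vs) q" unfolding same_order_def using assms by simp
qed

lemma req_lext:
  assumes lq: "length q = k" and dq: "distinct q" and X: "\<And>vs. vs \<in> X \<Longrightarrow> downward_path n par k vs"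
  shows "{L \<in> labelings n. X \<subseteq> consec_instances n par L q} = lext {0..<n} (pairsR X q)"
proof (rule set_eqI)
  fix L
  have resp: "(\<forall>vs\<in>X. same_order (map L vs) q) \<longleftrightarrow>
     (\<forall>u v. (u,v) \<in> pairsR X q \<longrightarrow> u \<in> {0..<n} \<longrightarrow> v \<in> {0..<n} \<longrightarrow> L u < L v)"
  proof
    assume A: "\<forall>vs\<in>X. same_order (map L vs) q"
    show "\<forall>u v. (u,v) \<in> pairsR X q \<longrightarrow> u \<in> {0..<n} \<longrightarrow> v \<in> {0..<n} \<longrightarrow> L u < L v"
    proof (intro allI impI)
      fix u v assume "(u,v) \<in> pairsR X q"
      then obtain vs a b where vs: "vs \<in> X" "a < k" "b < k" "q ! a < q ! b" "u = vs ! a" "v = vs ! b"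
        unfolding pairsR_def lq by blast
      have "length vs = k" using X[OF vs(1)] unfolding downward_path_def by simp
      then show "L u < L v" using A vs so_iff[of vs k q L] lq dq by auto
    qed
  next
    assume B: "\<forall>u v. (u,v) \<in> pairsR X q \<longrightarrow> u \<in> {0..<n} \<longrightarrow> v \<in> {0..<n} \<longrightarrow> L u < L v"
    show "\<forall>vs\<in>X. same_order (map L vs) q"
    proof
      fix vs assume vs: "vs \<in> X"
      have lv: "length vs = k" and sv: "set vs \<subseteq> {0..<n}" using X[OF vs] unfolding downward_path_def by auto
      have "\<forall>a<k. \<forall>b<k. q ! a < q ! b \<longrightarrow> L (vs ! a) < L (vs ! b)"
      proof (intro allI impI)
        fix a b assume ab: "a < k" "b < k" "q ! a < q ! b"
        have "(vs ! a, vs ! b) \<in> pairsR X q" unfolding pairsR_def lq using vs ab by blast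
        moreover have "vs ! a \<in> {0..<n}" "vs ! b \<in> {0..<n}" using sv lv ab nth_mem by blast+
        ultimately show "L (vs ! a) < L (vs ! b)" using B by blast
      qed
      then show "same_order (map L vs) q" using so_iff[OF lv lq dq] by simp
    qed
  qed
  have "X \<subseteq> consec_instances n par L q \<longleftrightarrow> (\<forall>vs\<in>X. same_order (map L vs) q)"
    unfolding consec_instances_def lq using X by auto
  then show "L \<in> {L \<in> labelings n. X \<subseteq> consec_instances n par L q} \<longleftrightarrow> L \<in> lext {0..<n} (pairsR X q)"
    unfolding labelings_def lext_def using resp by simp
qed


definition cn :: "nat \<Rightarrow> nat \<Rightarrow> nat" where "cn k m = 2 * k - 2 + m"

definition cpar :: "nat \<Rightarrow> nat \<Rightarrow> nat \<Rightarrow> nat \<Rightarrow> nat option" where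
  "cpar k j m v = (if v < k then (if v = 0 then None else Some (v - 1))
     else if v = k then Some j else if v < 2 * k - 2 then Some (v - 1)
     else if v < 2 * k - 2 + m then Some (2 * k - 3) else None)"

definition Qv :: "nat \<Rightarrow> nat \<Rightarrow> nat \<Rightarrow> nat \<Rightarrow> nat" where
  "Qv k j i l = (if l = 0 then j else if l < k - 1 then k + l - 1 else 2 * k - 2 + i)"

definition CX :: "nat \<Rightarrow> nat \<Rightarrow> nat \<Rightarrow> nat list set" where
  "CX k j m = insert [0..<k] {map (Qv k j i) [0..<k] | i. i < m}"

lemma cf_rooted: assumes "k \<ge> 3" "j < k" shows "rooted_forest (cn k m) (cpar k j m)"
proof -
  have A: "\<forall>v<cn k m. \<forall>u. cpar k j m v = Some u \<longrightarrow> u < cn k m"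
    using assms unfolding cn_def cpar_def by auto
  have "{(u, v). v < cn k m \<and> cpar k j m v = Some u} \<subseteq> {(x, y). x < y}"
    using assms unfolding cn_def cpar_def by (auto split: if_splits)
  then have "wf {(u, v). v < cn k m \<and> cpar k j m v = Some u}" using wf_less wf_subset by blast
  then show ?thesis using A unfolding rooted_forest_def by simp
qed

lemma cf_dpP: assumes "k \<ge> 3" shows "downward_path (cn k m) (cpar k j m) k [0..<k]"
  using assms unfolding downward_path_def cn_def cpar_def by auto

lemma Qv_lt: assumes "k \<ge> 3" "j < k" "i < m" "l < k" shows "Qv k j i l < cn k m"
  using assms unfolding Qv_def cn_def by auto

lemma cf_dpQ: assumes "k \<ge> 3" "j < k" "i < m" shows "downward_path (cn k m) (cpar k j m) k (map (Qv k j i) [0..<k])"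
proof -
  have "set (map (Qv k j i) [0..<k]) \<subseteq> {0..<cn k m}" using Qv_lt[OF assms] by auto
  moreover have "cpar k j m (Qv k j i (l + 1)) = Some (Qv k j i l)" if lk: "l + 1 < k" for l
  proof (cases "l = 0")
    case True then show ?thesis using assms unfolding Qv_def cpar_def by auto
  next
    case False
    show ?thesis
    proof (cases "l + 1 = k - 1")
      case True then show ?thesis using assms unfolding Qv_def cpar_def cn_def by auto
    next
      case False
      then have "l \<ge> 1" "l + 1 < k - 1" using \<open>l \<noteq> 0\<close> lk by auto
      then show ?thesis using assms unfolding Qv_def cpar_def by auto
    qed
  qed
  ultimately show ?thesis unfolding downward_path_def by auto
qed

lemma cf_paths: assumes "k \<ge> 3" "j < k" shows "\<And>vs. vs \<in> CX k j m \<Longrightarrow> downward_path (cn k m) (cpar k j m) k vs"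
  using cf_dpP[OF assms(1)] cf_dpQ[OF assms] unfolding CX_def by auto

definition qp :: "nat \<Rightarrow> nat \<Rightarrow> nat" where
  "qp k v = (if v < k then 0 else if v < 2 * k - 2 then v - k + 1 else k - 1)"

lemma Qp_char:
  fixes q :: "nat list"
  assumes k: "k \<ge> 3" and j: "j < k" and m: "m \<ge> 1"
  shows "(\<exists>i<m. \<exists>a<k. \<exists>b<k. q ! a < q ! b \<and> u = Qv k j i a \<and> w = Qv k j i b) \<longleftrightarrow>
    ((u = j \<or> k \<le> u \<and> u < cn k m) \<and> (w = j \<or> k \<le> w \<and> w < cn k m) \<and> \<not> (2 * k - 2 \<le> u \<and> 2 * k - 2 \<le> w)
      \<and> q ! (qp k u) < q ! (qp k w))"
proof
  assume "\<exists>i<m. \<exists>a<k. \<exists>b<k. q ! a < q ! b \<and> u = Qv k j i a \<and> w = Qv k j i b"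
  then obtain i a b where iab: "i < m" "a < k" "b < k" "q ! a < q ! b" "u = Qv k j i a" "w = Qv k j i b" by blast
  have gen: "(Qv k j i c = j \<or> k \<le> Qv k j i c \<and> Qv k j i c < cn k m) \<and> qp k (Qv k j i c) = c
     \<and> (2 * k - 2 \<le> Qv k j i c \<longleftrightarrow> c = k - 1)" if "c < k" for c
    using that k j iab(1) unfolding Qv_def qp_def cn_def by auto
  have "a \<noteq> b" using iab(4) by auto
  then show "(u = j \<or> k \<le> u \<and> u < cn k m) \<and> (w = j \<or> k \<le> w \<and> w < cn k m) \<and> \<not> (2 * k - 2 \<le> u \<and> 2 * k - 2 \<le> w)
      \<and> q ! (qp k u) < q ! (qp k w)"
    using gen[OF iab(2)] gen[OF iab(3)] iab by auto
next
  assume H: "(u = j \<or> k \<le> u \<and> u < cn k m) \<and> (w = j \<or> k \<le> w \<and> w < cn k m) \<and> \<not> (2 * k - 2 \<le> u \<and> 2 * k - 2 \<le> w)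
      \<and> q ! (qp k u) < q ! (qp k w)"
  define i where "i = (if 2 * k - 2 \<le> u then u - (2 * k - 2) else if 2 * k - 2 \<le> w then w - (2 * k - 2) else 0)"
  have im: "i < m" using H m j k unfolding i_def cn_def by auto

  have bck: "Qv k j i (qp k v) = v" "qp k v < k"
    if "v = j \<or> k \<le> v \<and> v < cn k m" "2 * k - 2 \<le> v \<Longrightarrow> i = v - (2 * k - 2)" for v
    using that k j unfolding Qv_def qp_def cn_def by auto
  have bu: "Qv k j i (qp k u) = u" "qp k u < k" using bck[of u] H unfolding i_def by auto
  have bw: "Qv k j i (qp k w) = w" "qp k w < k" using bck[of w] H unfolding i_def by auto
  show "\<exists>i<m. \<exists>a<k. \<exists>b<k. q ! a < q ! b \<and> u = Qv k j i a \<and> w = Qv k j i b"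
    using im bu bw H by metis
qed

lemma R_char:
  fixes q :: "nat list"
  assumes k: "k \<ge> 3" and j: "j < k" and m: "m \<ge> 1" and lq: "length q = k"
  shows "(u, w) \<in> pairsR (CX k j m) q \<longleftrightarrow> (u < k \<and> w < k \<and> q ! u < q ! w) \<or>
    ((u = j \<or> k \<le> u \<and> u < cn k m) \<and> (w = j \<or> k \<le> w \<and> w < cn k m) \<and> \<not> (2 * k - 2 \<le> u \<and> 2 * k - 2 \<le> w)
      \<and> q ! (qp k u) < q ! (qp k w))"
proof -
  have "(u, w) \<in> pairsR (CX k j m) q \<longleftrightarrow> (u < k \<and> w < k \<and> q ! u < q ! w) \<or>
     (\<exists>i<m. \<exists>a<k. \<exists>b<k. q ! a < q ! b \<and> u = Qv k j i a \<and> w = Qv k j i b)"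
  proof
    assume "(u, w) \<in> pairsR (CX k j m) q"
    then obtain vs a b where vs: "vs \<in> CX k j m" "a < k" "b < k" "q ! a < q ! b" "u = vs ! a" "w = vs ! b"
      unfolding pairsR_def lq by blast
    show "(u < k \<and> w < k \<and> q ! u < q ! w) \<or> (\<exists>i<m. \<exists>a<k. \<exists>b<k. q ! a < q ! b \<and> u = Qv k j i a \<and> w = Qv k j i b)"
    proof (cases "vs = [0..<k]")
      case True then show ?thesis using vs by auto
    next
      case False
      then obtain i where i: "i < m" "vs = map (Qv k j i) [0..<k]" using vs(1) unfolding CX_def by auto
      then show ?thesis using vs by auto
    qed
  next
    assume "(u < k \<and> w < k \<and> q ! u < q ! w) \<or> (\<exists>i<m. \<exists>a<k. \<exists>b<k. q ! a < q ! b \<and> u = Qv k j i a \<and> w = Qv k j i b)"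
    then show "(u, w) \<in> pairsR (CX k j m) q"
    proof
      assume "u < k \<and> w < k \<and> q ! u < q ! w"
      then have "[0..<k] \<in> CX k j m" "u < k" "w < k" "q ! u < q ! w" "u = [0..<k] ! u" "w = [0..<k] ! w"
        unfolding CX_def by auto
      then show ?thesis unfolding pairsR_def lq by blast
    next
      assume "\<exists>i<m. \<exists>a<k. \<exists>b<k. q ! a < q ! b \<and> u = Qv k j i a \<and> w = Qv k j i b"
      then obtain i a b where iab: "i < m" "a < k" "b < k" "q ! a < q ! b" "u = Qv k j i a" "w = Qv k j i b" by blast
      then have "map (Qv k j i) [0..<k] \<in> CX k j m" "u = map (Qv k j i) [0..<k] ! a" "w = map (Qv k j i) [0..<k] ! b"
        unfolding CX_def by auto
      then show ?thesis unfolding pairsR_def lq using iab by blast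
    qed
  qed
  then show ?thesis using Qp_char[OF k j m, of q u w] by simp
qed



lemma pat_len: "is_pattern k q \<Longrightarrow> length q = k" unfolding is_pattern_def by simp

lemma pat_distinct: assumes "is_pattern k q" shows "distinct q"
proof -
  have "card (set q) = length q" using assms unfolding is_pattern_def by simp
  then show ?thesis by (simp add: card_distinct)
qed

lemma pat_inj: assumes "is_pattern k q" "a < k" "b < k" "q ! a = q ! b" shows "a = b"
  using assms pat_distinct[OF assms(1)] pat_len[OF assms(1)] by (simp add: nth_eq_iff_index_eq)

lemma pat_surj: assumes "is_pattern k q" "y \<in> {1..k}" obtains a where "a < k" "q ! a = y"
proof -
  have "y \<in> set q" using assms unfolding is_pattern_def by simp
  then obtain a where "a < length q" "q ! a = y" by (auto simp: in_set_conv_nth)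
  then show ?thesis using that pat_len[OF assms(1)] by simp
qed

lemma cnt_lt: assumes pq: "is_pattern k q" and c: "c \<le> k + 1"
  shows "card {a. a < k \<and> q ! a < c} = c - 1"
proof -
  have "bij_betw (\<lambda>a. q ! a) {a. a < k \<and> q ! a < c} {1..<c}"
  proof (rule bij_betw_imageI)
    show "inj_on (\<lambda>a. q ! a) {a. a < k \<and> q ! a < c}" using pat_inj[OF pq] by (auto simp: inj_on_def)
    show "(\<lambda>a. q ! a) ` {a. a < k \<and> q ! a < c} = {1..<c}"
    proof
      show "(\<lambda>a. q ! a) ` {a. a < k \<and> q ! a < c} \<subseteq> {1..<c}" using pattern_vals[OF pq] by auto
      show "{1..<c} \<subseteq> (\<lambda>a. q ! a) ` {a. a < k \<and> q ! a < c}"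
      proof
        fix y assume y: "y \<in> {1..<c}"
        then have "y \<in> {1..k}" using c by auto
        then obtain a where "a < k" "q ! a = y" using pat_surj[OF pq] by blast
        then show "y \<in> (\<lambda>a. q ! a) ` {a. a < k \<and> q ! a < c}" using y by force
      qed
    qed
  qed
  then show ?thesis by (simp add: bij_betw_same_card)
qed

lemma cnt_gt: assumes pq: "is_pattern k q"
  shows "card {a. a < k \<and> c < q ! a} = k - c"
proof -
  have "bij_betw (\<lambda>a. q ! a) {a. a < k \<and> c < q ! a} {c<..k}"
  proof (rule bij_betw_imageI)
    show "inj_on (\<lambda>a. q ! a) {a. a < k \<and> c < q ! a}" using pat_inj[OF pq] by (auto simp: inj_on_def)
    show "(\<lambda>a. q ! a) ` {a. a < k \<and> c < q ! a} = {c<..k}"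
    proof
      show "(\<lambda>a. q ! a) ` {a. a < k \<and> c < q ! a} \<subseteq> {c<..k}" using pattern_vals[OF pq] by auto
      show "{c<..k} \<subseteq> (\<lambda>a. q ! a) ` {a. a < k \<and> c < q ! a}"
      proof
        fix y assume y: "y \<in> {c<..k}"
        then have "y \<in> {1..k}" by auto
        then obtain a where "a < k" "q ! a = y" using pat_surj[OF pq] by blast
        then show "y \<in> (\<lambda>a. q ! a) ` {a. a < k \<and> c < q ! a}" using y by force
      qed
    qed
  qed
  then show ?thesis by (simp add: bij_betw_same_card)
qed

definition PL :: "nat \<Rightarrow> nat \<Rightarrow> nat list \<Rightarrow> nat set" where "PL k j q = {a. a < k \<and> q ! a < q ! j}"
definition PU :: "nat \<Rightarrow> nat \<Rightarrow> nat list \<Rightarrow> nat set" where "PU k j q = {a. a < k \<and> q ! j < q ! a}"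
definition GL :: "nat \<Rightarrow> nat list \<Rightarrow> nat set" where "GL k q = {v. k \<le> v \<and> v < 2 * k - 2 \<and> q ! (v - k + 1) < q ! 0}"
definition GU :: "nat \<Rightarrow> nat \<Rightarrow> nat list \<Rightarrow> nat set" where
  "GU k m q = {v. k \<le> v \<and> v < 2 * k - 2 \<and> q ! 0 < q ! (v - k + 1)} \<union> {2 * k - 2..<cn k m}"

lemma card_GL: assumes pq: "is_pattern k q" and k: "k \<ge> 3" and up: "q ! 0 < q ! (k - 1)"
  shows "card (GL k q) = q ! 0 - 1"
proof -
  have "bij_betw (\<lambda>v. v - k + 1) (GL k q) {a. a < k \<and> q ! a < q ! 0}"
  proof (rule bij_betw_byWitness[where f' = "\<lambda>a. k + a - 1"])
    show "\<forall>a\<in>GL k q. k + (a - k + 1) - 1 = a" unfolding GL_def by auto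
    show "\<forall>a\<in>{a. a < k \<and> q ! a < q ! 0}. k + a - 1 - k + 1 = a"
    proof
      fix a assume "a \<in> {a. a < k \<and> q ! a < q ! 0}"
      then have "a \<noteq> 0" by (cases "a = 0") auto
      then show "k + a - 1 - k + 1 = a" by simp
    qed
    show "(\<lambda>v. v - k + 1) ` GL k q \<subseteq> {a. a < k \<and> q ! a < q ! 0}" unfolding GL_def using k by auto
    show "(\<lambda>a. k + a - 1) ` {a. a < k \<and> q ! a < q ! 0} \<subseteq> GL k q"
    proof
      fix v assume "v \<in> (\<lambda>a. k + a - 1) ` {a. a < k \<and> q ! a < q ! 0}"
      then obtain a where a: "a < k" "q ! a < q ! 0" "v = k + a - 1" by auto
      have "a \<noteq> 0" using a by (cases "a = 0") auto
      moreover have "a \<noteq> k - 1" using a up by auto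
      ultimately have "a < k - 1" "v - k + 1 = a" using a by auto
      then show "v \<in> GL k q" unfolding GL_def using a \<open>a \<noteq> 0\<close> by auto
    qed
  qed
  then have "card (GL k q) = card {a. a < k \<and> q ! a < q ! 0}" by (rule bij_betw_same_card)
  also have "\<dots> = q ! 0 - 1" using cnt_lt[OF pq] pattern_vals[OF pq, of 0] k by auto
  finally show ?thesis .
qed

lemma card_GU: assumes pq: "is_pattern k q" and k: "k \<ge> 3" and up: "q ! 0 < q ! (k - 1)"
  shows "card (GU k m q) = (k - q ! 0 - 1) + m"
proof -
  define G1 where "G1 = {v. k \<le> v \<and> v < 2 * k - 2 \<and> q ! 0 < q ! (v - k + 1)}"
  have "bij_betw (\<lambda>v. v - k + 1) G1 ({a. a < k \<and> q ! 0 < q ! a} - {k - 1})"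
  proof (rule bij_betw_byWitness[where f' = "\<lambda>a. k + a - 1"])
    show "\<forall>a\<in>G1. k + (a - k + 1) - 1 = a" unfolding G1_def by auto
    show "\<forall>a\<in>{a. a < k \<and> q ! 0 < q ! a} - {k - 1}. k + a - 1 - k + 1 = a"
    proof
      fix a assume "a \<in> {a. a < k \<and> q ! 0 < q ! a} - {k - 1}"
      then have "a \<noteq> 0" by (cases "a = 0") auto
      then show "k + a - 1 - k + 1 = a" by simp
    qed
    show "(\<lambda>v. v - k + 1) ` G1 \<subseteq> {a. a < k \<and> q ! 0 < q ! a} - {k - 1}" unfolding G1_def using k by auto
    show "(\<lambda>a. k + a - 1) ` ({a. a < k \<and> q ! 0 < q ! a} - {k - 1}) \<subseteq> G1"
    proof
      fix v assume "v \<in> (\<lambda>a. k + a - 1) ` ({a. a < k \<and> q ! 0 < q ! a} - {k - 1})"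
      then obtain a where a: "a < k" "q ! 0 < q ! a" "a \<noteq> k - 1" "v = k + a - 1" by auto
      have "a \<noteq> 0" using a by (cases "a = 0") auto
      then have "a < k - 1" "v - k + 1 = a" using a by auto
      then show "v \<in> G1" unfolding G1_def using a \<open>a \<noteq> 0\<close> by auto
    qed
  qed
  then have "card G1 = card ({a. a < k \<and> q ! 0 < q ! a} - {k - 1})" by (rule bij_betw_same_card)
  also have "\<dots> = (k - q ! 0) - 1"
  proof -
    have "k - 1 \<in> {a. a < k \<and> q ! 0 < q ! a}" using up k by auto
    moreover have "finite {a. a < k \<and> q ! 0 < q ! a}" by auto
    ultimately show ?thesis using cnt_gt[OF pq, of "q ! 0"] by simp
  qed
  finally have c1: "card G1 = k - q ! 0 - 1" .
  have "GU k m q = G1 \<union> {2 * k - 2..<cn k m}" unfolding GU_def G1_def by simp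
  moreover have "G1 \<inter> {2 * k - 2..<cn k m} = {}" unfolding G1_def by auto
  moreover have "finite G1" unfolding G1_def by auto
  ultimately have "card (GU k m q) = card G1 + card {2 * k - 2..<cn k m}" by (simp add: card_Un_disjoint)
  then show ?thesis using c1 unfolding cn_def by simp
qed



lemma count_formula:
  fixes q :: "nat list"
  assumes k: "k \<ge> 3" and j: "j < k" and m: "m \<ge> 1" and pq: "is_pattern k q" and up: "q ! 0 < q ! (k - 1)"
  shows "card (lext {0..<cn k m} (pairsR (CX k j m) q)) =
     ((q ! j - 1) + (q ! 0 - 1) choose (q ! j - 1)) * ((k - q ! j) + (k - q ! 0 - 1 + m) choose (k - q ! j))
       * card (lext (GU k m q) (pairsR (CX k 0 m) q))"
proof -
  define R where "R = pairsR (CX k j m) q"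
  define n where "n = cn k m"
  have lq: "length q = k" using pq by (rule pat_len)
  have Rc: "(u,w) \<in> R \<longleftrightarrow> (u < k \<and> w < k \<and> q ! u < q ! w) \<or> ((u = j \<or> k \<le> u \<and> u < n) \<and> (w = j \<or> k \<le> w \<and> w < n)
      \<and> \<not> (2 * k - 2 \<le> u \<and> 2 * k - 2 \<le> w) \<and> q ! (qp k u) < q ! (qp k w))" for u w
    using R_char[OF k j m lq, of u w] unfolding R_def n_def by simp
  have qp1: "qp k v = 0" if "v < k" for v using that unfolding qp_def by simp
  have qp2: "qp k v = v - k + 1" if "k \<le> v" "v < 2 * k - 2" for v using that unfolding qp_def by simp
  have qp3: "qp k v = k - 1" if "2 * k - 2 \<le> v" for v using that k unfolding qp_def by simp
  have qinj: "a = b" if "a < k" "b < k" "q ! a = q ! b" for a b using pat_inj[OF pq that] .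
  have n2: "2 * k - 2 \<le> n" "k \<le> 2 * k - 2" using k unfolding n_def cn_def by auto
  define Lo where "Lo = PL k j q \<union> GL k q"
  define Up where "Up = PU k j q \<union> GU k m q"
  have jLo: "j \<notin> Lo" unfolding Lo_def PL_def GL_def using j by auto
  have jUp: "j \<notin> Up" unfolding Up_def PU_def GU_def using j k by auto
  have LoUp: "Lo \<inter> Up = {}" unfolding Lo_def Up_def PL_def PU_def GL_def GU_def using k by auto
  have Vd: "{0..<n} = Lo \<union> {j} \<union> Up"
  proof
    show "{0..<n} \<subseteq> Lo \<union> {j} \<union> Up"
    proof
      fix v assume v: "v \<in> {0..<n}"
      show "v \<in> Lo \<union> {j} \<union> Up"
      proof (cases "v < k")
        case True
        show ?thesis
        proof (cases "v = j")
          case False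
          then have "q ! v \<noteq> q ! j" using qinj True j by blast
          then show ?thesis unfolding Lo_def Up_def PL_def PU_def using True by auto
        qed simp
      next
        case False
        show ?thesis
        proof (cases "v < 2 * k - 2")
          case True
          have "v - k + 1 \<noteq> 0" "v - k + 1 < k" using True False by auto
          have "0 < k" using k by simp
          then have "q ! (v - k + 1) \<noteq> q ! 0" using qinj[of "v - k + 1" 0] \<open>v - k + 1 \<noteq> 0\<close> \<open>v - k + 1 < k\<close> by blast
          then show ?thesis unfolding Lo_def Up_def GL_def GU_def using True False by auto
        next
          case False2: False
          then show ?thesis using v unfolding Up_def GU_def n_def by auto
        qed
      qed
    qed
    show "Lo \<union> {j} \<union> Up \<subseteq> {0..<n}" unfolding Lo_def Up_def PL_def PU_def GL_def GU_def n_def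
      using j n2 unfolding n_def by auto
  qed
  have finLo: "finite Lo"
  proof (rule finite_subset)
    show "Lo \<subseteq> {0..<n}" using Vd by blast
  qed simp
  have finUp: "finite Up"
  proof (rule finite_subset)
    show "Up \<subseteq> {0..<n}" using Vd by blast
  qed simp
  have lx: "(l, j) \<in> R" if lL: "l \<in> Lo" for l
  proof -
    consider "l \<in> PL k j q" | "l \<in> GL k q" using lL unfolding Lo_def by blast
    then show ?thesis
    proof cases
      case 1 then show ?thesis unfolding Rc PL_def using j by auto
    next
      case 2
      then have l: "k \<le> l" "l < 2 * k - 2" "q ! (l - k + 1) < q ! 0" unfolding GL_def by auto
      then show ?thesis unfolding Rc using qp2[OF l(1,2)] qp1[OF j] n2 by auto
    qed
  qed
  have xu: "(j, u) \<in> R" if uU: "u \<in> Up" for u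
  proof -
    consider "u \<in> PU k j q" | "k \<le> u" "u < 2 * k - 2" "q ! 0 < q ! (u - k + 1)" | "2 * k - 2 \<le> u" "u < n"
      using uU unfolding Up_def GU_def n_def by auto
    then show ?thesis
    proof cases
      case 1 then show ?thesis unfolding Rc PU_def using j by auto
    next
      case 2 then show ?thesis unfolding Rc using qp2[OF 2(1,2)] qp1[OF j] n2 by auto
    next
      case 3 then show ?thesis unfolding Rc using qp3[OF 3(1)] qp1[OF j] n2 up j by auto
    qed
  qed
  have inUp: "w \<in> Up" if "w \<in> Lo \<union> {j} \<union> Up" "w = j \<or> k \<le> w \<and> w < n" "q ! 0 < q ! (qp k w)" for w
  proof -
    have "w \<noteq> j" using that(3) qp1[OF j] by auto
    then have w: "k \<le> w" "w < n" using that(2) by auto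
    show ?thesis
    proof (cases "w < 2 * k - 2")
      case True then show ?thesis using w that(3) qp2[OF w(1) True] unfolding Up_def GU_def by auto
    next
      case False then show ?thesis using w unfolding Up_def GU_def n_def by auto
    qed
  qed
  have upq: "q ! 0 < q ! (qp k u)" if "u \<in> GU k m q" for u
  proof (cases "u < 2 * k - 2")
    case True then show ?thesis using that qp2[of u] unfolding GU_def by auto
  next
    case False then show ?thesis using that qp3[of u] up unfolding GU_def by auto
  qed
  have xw: "w \<in> Up" if jw: "(j, w) \<in> R" "w \<in> Lo \<union> {j} \<union> Up" for w
  proof -
    consider "w < k" "q ! j < q ! w" | "w = j \<or> k \<le> w \<and> w < n" "q ! (qp k j) < q ! (qp k w)"
      using jw(1) unfolding Rc by blast
    then show ?thesis
    proof cases
      case 1 then show ?thesis unfolding Up_def PU_def by auto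
    next
      case 2 then show ?thesis using inUp[OF jw(2)] qp1[OF j] by auto
    qed
  qed
  have uw: "w \<in> Up" if uw: "(u, w) \<in> R" "u \<in> Up" "w \<in> Lo \<union> {j} \<union> Up" for u w
  proof -
    consider "u < k" "w < k" "q ! u < q ! w" | "u = j \<or> k \<le> u \<and> u < n" "w = j \<or> k \<le> w \<and> w < n" "q ! (qp k u) < q ! (qp k w)"
      using uw(1) unfolding Rc by blast
    then show ?thesis
    proof cases
      case 1
      then have "u \<in> PU k j q" using uw(2) k unfolding Up_def GU_def by auto
      then show ?thesis using 1 unfolding Up_def PU_def by auto
    next
      case 2
      have "u \<noteq> j" using uw(2) jUp by auto
      then have "k \<le> u" using 2 by auto
      then have "u \<in> GU k m q" using uw(2) unfolding Up_def PU_def by auto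
      then have "q ! 0 < q ! (qp k u)" by (rule upq)
      then have "q ! 0 < q ! (qp k w)" using 2 by simp
      then show ?thesis using inUp[OF uw(3) 2(2)] by simp
    qed
  qed
  have ser: "card (lext (Lo \<union> {j} \<union> Up) R) = card (lext Lo R) * card (lext Up R)"
    by (rule lext_series[OF finLo finUp jLo jUp LoUp lx xu xw uw])
  have PLk: "u < k" "u \<noteq> j" if "u \<in> PL k j q" for u using that unfolding PL_def by auto
  have PUk: "u < k" "u \<noteq> j" if "u \<in> PU k j q" for u using that unfolding PU_def by auto
  have GLk: "k \<le> u" "u < 2 * k - 2" if "u \<in> GL k q" for u using that unfolding GL_def by auto
  have GUk: "k \<le> u" "u < n" if "u \<in> GU k m q" for u using that k unfolding GU_def n_def cn_def by auto
  have finPL: "finite (PL k j q)" unfolding PL_def by auto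
  have finPU: "finite (PU k j q)" unfolding PU_def by auto
  have finGL: "finite (GL k q)" unfolding GL_def by auto
  have finGU: "finite (GU k m q)" unfolding GU_def by auto
  have Pcompat: "q ! u < q ! w" if "(u, w) \<in> R" "u < k" "u \<noteq> j" for u w
    using that unfolding Rc by auto
  have Ptotal: "(u, w) \<in> R \<or> (w, u) \<in> R" if "u < k" "w < k" "u \<noteq> w" for u w
  proof -
    have "q ! u \<noteq> q ! w" using qinj that by blast
    then show ?thesis unfolding Rc using that by auto
  qed
  have Gcompat: "q ! (u - k + 1) < q ! (w - k + 1)" if "(u, w) \<in> R" "u \<in> GL k q" "w \<in> GL k q" for u w
  proof -
    have "\<not> u < k" using GLk[OF that(2)] by simp
    then have "q ! (qp k u) < q ! (qp k w)" using that(1) unfolding Rc by auto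
    then show ?thesis using qp2[OF GLk[OF that(2)]] qp2[OF GLk[OF that(3)]] by simp
  qed
  have Gtotal: "(u, w) \<in> R \<or> (w, u) \<in> R" if "u \<in> GL k q" "w \<in> GL k q" "u \<noteq> w" for u w
  proof -
    have u: "k \<le> u" "u < 2 * k - 2" and w: "k \<le> w" "w < 2 * k - 2" using GLk that by auto
    have "u - k + 1 \<noteq> w - k + 1" using u w that(3) by auto
    moreover have "u - k + 1 < k" "w - k + 1 < k" using u w by auto
    ultimately have "q ! (u - k + 1) \<noteq> q ! (w - k + 1)" using qinj by blast
    then have "q ! (qp k u) \<noteq> q ! (qp k w)" using qp2[OF u] qp2[OF w] by simp
    then show ?thesis unfolding Rc using u w n2 by auto
  qed
  have cPL: "card (lext (PL k j q) R) = 1"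
    by (rule lext_chain[where h = "\<lambda>v. q ! v"]) (use finPL Pcompat PLk Ptotal in auto)
  have cPU: "card (lext (PU k j q) R) = 1"
    by (rule lext_chain[where h = "\<lambda>v. q ! v"]) (use finPU Pcompat PUk Ptotal in auto)
  have cGL: "card (lext (GL k q) R) = 1"
    by (rule lext_chain[where h = "\<lambda>v. q ! (v - k + 1)"]) (use finGL Gcompat Gtotal in auto)
  have noX1: "\<not> (u \<in> PL k j q \<and> w \<in> GL k q) \<and> \<not> (u \<in> GL k q \<and> w \<in> PL k j q)" if "(u, w) \<in> R" for u w
  proof -
    have "False" if "u \<in> PL k j q" "w \<in> GL k q" using \<open>(u, w) \<in> R\<close> PLk[OF that(1)] GLk[OF that(2)] unfolding Rc by auto
    moreover have "False" if "u \<in> GL k q" "w \<in> PL k j q" using \<open>(u, w) \<in> R\<close> PLk[OF that(2)] GLk[OF that(1)] unfolding Rc by auto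
    ultimately show ?thesis by blast
  qed
  have noX2: "\<not> (u \<in> PU k j q \<and> w \<in> GU k m q) \<and> \<not> (u \<in> GU k m q \<and> w \<in> PU k j q)" if "(u, w) \<in> R" for u w
  proof -
    have "False" if "u \<in> PU k j q" "w \<in> GU k m q" using \<open>(u, w) \<in> R\<close> PUk[OF that(1)] GUk[OF that(2)] unfolding Rc by auto
    moreover have "False" if "u \<in> GU k m q" "w \<in> PU k j q" using \<open>(u, w) \<in> R\<close> PUk[OF that(2)] GUk[OF that(1)] unfolding Rc by auto
    ultimately show ?thesis by blast
  qed
  have dis1: "PL k j q \<inter> GL k q = {}" using PLk GLk by fastforce
  have dis2: "PU k j q \<inter> GU k m q = {}" using PUk GUk by fastforce
  have shL: "card (lext Lo R) = (card (PL k j q) + card (GL k q) choose card (PL k j q)) * card (lext (PL k j q) R) * card (lext (GL k q) R)"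
    unfolding Lo_def by (rule lext_shuffle[OF finPL finGL dis1 noX1])
  have shU: "card (lext Up R) = (card (PU k j q) + card (GU k m q) choose card (PU k j q)) * card (lext (PU k j q) R) * card (lext (GU k m q) R)"
    unfolding Up_def by (rule lext_shuffle[OF finPU finGU dis2 noX2])
  have qj: "q ! j \<in> {1..k}" using pattern_vals[OF pq j] .
  have cardPL: "card (PL k j q) = q ! j - 1" unfolding PL_def using cnt_lt[OF pq, of "q ! j"] qj by auto
  have cardPU: "card (PU k j q) = k - q ! j" unfolding PU_def using cnt_gt[OF pq, of "q ! j"] by simp
  have lq0: "length q = k" by (rule lq)
  have R0c: "(u,w) \<in> pairsR (CX k 0 m) q \<longleftrightarrow> (u < k \<and> w < k \<and> q ! u < q ! w) \<or> ((u = 0 \<or> k \<le> u \<and> u < n) \<and> (w = 0 \<or> k \<le> w \<and> w < n)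
      \<and> \<not> (2 * k - 2 \<le> u \<and> 2 * k - 2 \<le> w) \<and> q ! (qp k u) < q ! (qp k w))" for u w
    using R_char[OF k _ m lq, of 0 u w] k unfolding n_def by simp
  have indep: "lext (GU k m q) R = lext (GU k m q) (pairsR (CX k 0 m) q)"
  proof (rule lext_cong)
    fix u w assume u: "u \<in> GU k m q" and w: "w \<in> GU k m q"
    have "k \<le> u" "u < n" "k \<le> w" "w < n" using GUk u w by auto
    moreover have "j < k" "0 < k" using j k by auto
    ultimately show "(u, w) \<in> R \<longleftrightarrow> (u, w) \<in> pairsR (CX k 0 m) q" unfolding Rc R0c by auto
  qed
  have "card (lext {0..<cn k m} (pairsR (CX k j m) q)) = card (lext (Lo \<union> {j} \<union> Up) R)"
    using Vd unfolding R_def n_def by simp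
  also have "\<dots> = card (lext Lo R) * card (lext Up R)" by (rule ser)
  also have "\<dots> = ((q ! j - 1) + (q ! 0 - 1) choose (q ! j - 1)) * ((k - q ! j) + (k - q ! 0 - 1 + m) choose (k - q ! j))
       * card (lext (GU k m q) (pairsR (CX k 0 m) q))"
    unfolding shL shU cPL cPU cGL cardPL cardPU card_GL[OF pq k up] card_GU[OF pq k up] indep by simp
  finally show ?thesis .
qed



lemma choose_step: assumes "1 \<le> r" "r \<le> n" shows "n choose r < Suc n choose r"
proof -
  obtain r' where r: "r = Suc r'" using assms(1) by (cases r) auto
  have "0 < n choose r'" using assms r by simp
  then show ?thesis unfolding r by simp
qed

lemma choose_mono_top: assumes "1 \<le> r" "r \<le> n" "n < n'" shows "n choose r < n' choose r"
proof -
  have "n choose r < (n + Suc d) choose r" for d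
  proof (induction d)
    case 0 then show ?case using choose_step[OF assms(1,2)] by simp
  next
    case (Suc d)
    have "(n + Suc d) choose r < Suc (n + Suc d) choose r" using assms by (intro choose_step) auto
    then show ?case using Suc by simp
  qed
  from this[of "n' - n - 1"] show ?thesis using assms(3) by simp
qed

definition Fv :: "nat \<Rightarrow> nat \<Rightarrow> nat \<Rightarrow> nat \<Rightarrow> nat" where
  "Fv k m c v = ((v - 1) + (c - 1) choose (v - 1)) * ((k - v) + (k - c - 1 + m) choose (k - v))"

lemma Fv_step:
  assumes k: "k \<ge> 3" and c: "1 \<le> c" "c \<le> k - 1" and m: "k * k \<le> m" and v: "1 \<le> v" "v < k"
  shows "Fv k m c (Suc v) < Fv k m c v"
proof -
  define t where "t = v - 1"
  define A where "A = c - 1"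
  define r where "r = k - v - 1"
  define D where "D = k - c - 1 + m"
  have vt: "v = Suc t" and kv: "k - v = Suc r" and kv': "k - Suc v = r" using v unfolding t_def r_def by auto
  have F1: "Fv k m c v = (t + A choose t) * (Suc r + D choose Suc r)"
    unfolding Fv_def t_def A_def kv D_def using v by simp
  have F2: "Fv k m c (Suc v) = (Suc t + A choose Suc t) * (r + D choose r)"
    unfolding Fv_def kv' D_def A_def t_def using v by (simp add: Suc_diff_le)
  define X where "X = t + A choose t"
  define Y where "Y = r + D choose r"
  define Xs where "Xs = Suc t + A choose Suc t"
  define Ys where "Ys = Suc r + D choose Suc r"
  have X0: "X > 0" and Y0: "Y > 0" unfolding X_def Y_def by simp_all
  have e1: "Suc (t + A) * X = Xs * Suc t" unfolding X_def Xs_def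
    using Suc_times_binomial_eq[of "t + A" t] by simp
  have e2: "Suc (r + D) * Y = Ys * Suc r" unfolding Y_def Ys_def
    using Suc_times_binomial_eq[of "r + D" r] by simp
  have AD: "A * Suc r < D * Suc t"
  proof -
    have "A < k" "Suc r \<le> k" "0 < k" unfolding A_def r_def using c k by auto
    then have "A * Suc r < k * k" by (meson le_less_trans mult_le_mono2 mult_less_mono1 order_refl)
    also have "\<dots> \<le> D" unfolding D_def using m by simp
    also have "\<dots> \<le> D * Suc t" by simp
    finally show ?thesis .
  qed
  have key: "Suc (t + A) * Suc r < Suc (r + D) * Suc t"
  proof -
    have "Suc (t + A) * Suc r = Suc t * Suc r + A * Suc r" by (simp add: algebra_simps)
    also have "\<dots> < Suc t * Suc r + D * Suc t" using AD by simp
    also have "\<dots> = Suc (r + D) * Suc t" by (simp add: algebra_simps)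
    finally show ?thesis .
  qed
  have "Xs * Y * (Suc t * Suc r) = (Xs * Suc t) * (Y * Suc r)" by (simp add: algebra_simps)
  also have "\<dots> = (Suc (t + A) * X) * (Y * Suc r)" using e1 by simp
  also have "\<dots> = (X * Y) * (Suc (t + A) * Suc r)" by (simp add: algebra_simps)
  also have "\<dots> < (X * Y) * (Suc (r + D) * Suc t)" using key X0 Y0 by simp
  also have "\<dots> = X * (Suc (r + D) * Y) * Suc t" by (simp add: algebra_simps)
  also have "\<dots> = X * (Ys * Suc r) * Suc t" using e2 by simp
  also have "\<dots> = X * Ys * (Suc t * Suc r)" by (simp add: algebra_simps)
  finally have "Xs * Y < X * Ys" by (simp only: mult_less_cancel2)
  then show ?thesis unfolding F1 F2 X_def Y_def Xs_def Ys_def .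
qed

lemma Fv_anti:
  assumes k: "k \<ge> 3" and c: "1 \<le> c" "c \<le> k - 1" and m: "k * k \<le> m" and v: "1 \<le> v" "v < v'" "v' \<le> k"
  shows "Fv k m c v' < Fv k m c v"
proof -
  have "Fv k m c (v + Suc d) < Fv k m c v" if "v + Suc d \<le> k" for d
    using that
  proof (induction d)
    case 0 then show ?case using Fv_step[OF k c m v(1)] by simp
  next
    case (Suc d)
    have "Fv k m c (Suc (v + Suc d)) < Fv k m c (v + Suc d)" using Suc.prems v by (intro Fv_step[OF k c m]) auto
    then show ?case using Suc by simp
  qed
  from this[of "v' - v - 1"] show ?thesis using v by simp
qed

lemma Fv_inj:
  assumes k: "k \<ge> 3" and c: "1 \<le> c" "c \<le> k - 1" and m: "k * k \<le> m"
    and v: "1 \<le> v" "v \<le> k" and v': "1 \<le> v'" "v' \<le> k" and eq: "Fv k m c v = Fv k m c v'"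
  shows "v = v'"
proof (rule ccontr)
  assume "v \<noteq> v'"
  then consider "v < v'" | "v' < v" by linarith
  then show False
  proof cases
    case 1 then show False using Fv_anti[OF k c m v(1) 1 v'(2)] eq by simp
  next
    case 2 then show False using Fv_anti[OF k c m v'(1) 2 v(2)] eq by simp
  qed
qed

lemma Fv_le1: assumes k: "k \<ge> 3" and c: "1 \<le> c" "c \<le> k - 1" and m: "k * k \<le> m" and v: "1 \<le> v" "v \<le> k"
  shows "Fv k m c v \<le> Fv k m c 1"
  using Fv_anti[OF k c m _ _ v(2), of 1] v by (cases "v = 1") auto

lemma Fv_gek: assumes k: "k \<ge> 3" and c: "1 \<le> c" "c \<le> k - 1" and m: "k * k \<le> m" and v: "1 \<le> v" "v \<le> k"
  shows "Fv k m c k \<le> Fv k m c v"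
  using Fv_anti[OF k c m v(1) _ order_refl] v by (cases "v = k") auto

lemma Fv_1: "k \<ge> 3 \<Longrightarrow> Fv k m c 1 = ((k - 1) + (k - c - 1 + m)) choose (k - 1)"
  unfolding Fv_def by simp

lemma Fv_k: "k \<ge> 3 \<Longrightarrow> Fv k m c k = ((k - 1) + (c - 1)) choose (k - 1)"
  unfolding Fv_def by simp



definition EE :: "nat \<Rightarrow> nat \<Rightarrow> nat list \<Rightarrow> nat" where
  "EE k m q = card (lext (GU k m q) (pairsR (CX k 0 m) q))"

lemma EE_pos:
  fixes q :: "nat list"
  assumes k: "k \<ge> 3" and m: "m \<ge> 1" and pq: "is_pattern k q"
  shows "EE k m q \<ge> 1"
  unfolding EE_def
proof (rule lext_pos[where h = "\<lambda>v. q ! (qp k v)"])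
  show "finite (GU k m q)" unfolding GU_def by auto
  have lq: "length q = k" by (rule pat_len[OF pq])
  fix u w assume uw: "(u, w) \<in> pairsR (CX k 0 m) q" "u \<in> GU k m q" "w \<in> GU k m q"
  have "k \<le> u" using uw(2) k unfolding GU_def by auto
  then show "q ! (qp k u) < q ! (qp k w)" using uw(1) R_char[OF k _ m lq, of 0 u w] k by auto
qed

lemma cnt_link:
  fixes q q' :: "nat list"
  assumes ss: "super_strongly_cfw_equiv k q q'" and k: "k \<ge> 3" and j: "j < k" and m: "m \<ge> 1"
    and pq: "is_pattern k q" and pq': "is_pattern k q'" and up: "q ! 0 < q ! (k - 1)" and up': "q' ! 0 < q' ! (k - 1)"
  shows "Fv k m (q ! 0) (q ! j) * EE k m q = Fv k m (q' ! 0) (q' ! j) * EE k m q'"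
proof -
  have rf: "rooted_forest (cn k m) (cpar k j m)" by (rule cf_rooted[OF k j])
  have paths: "\<And>vs. vs \<in> CX k j m \<Longrightarrow> downward_path (cn k m) (cpar k j m) k vs" by (rule cf_paths[OF k j])
  have e: "card {L \<in> labelings (cn k m). CX k j m \<subseteq> consec_instances (cn k m) (cpar k j m) L q}
     = card {L \<in> labelings (cn k m). CX k j m \<subseteq> consec_instances (cn k m) (cpar k j m) L q'}"
    by (rule req_eq[OF ss pat_len[OF pq] pat_len[OF pq'] rf])
  have l1: "{L \<in> labelings (cn k m). CX k j m \<subseteq> consec_instances (cn k m) (cpar k j m) L q} = lext {0..<cn k m} (pairsR (CX k j m) q)"
    by (rule req_lext[OF pat_len[OF pq] pat_distinct[OF pq] paths])
  have l2: "{L \<in> labelings (cn k m). CX k j m \<subseteq> consec_instances (cn k m) (cpar k j m) L q'} = lext {0..<cn k m} (pairsR (CX k j m) q')"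
    by (rule req_lext[OF pat_len[OF pq'] pat_distinct[OF pq'] paths])
  show ?thesis using e unfolding l1 l2 count_formula[OF k j m pq up] count_formula[OF k j m pq' up'] Fv_def EE_def .
qed

lemma c_range: assumes k: "k \<ge> 3" and pq: "is_pattern k q" and up: "q ! 0 < q ! (k - 1)"
  shows "1 \<le> q ! 0" "q ! 0 \<le> k - 1"
proof -
  have "q ! 0 \<in> {1..k}" "q ! (k - 1) \<in> {1..k}" using pattern_vals[OF pq] k by auto
  then show "1 \<le> q ! 0" "q ! 0 \<le> k - 1" using up by auto
qed

lemma cmp_false:
  assumes k: "k \<ge> 3" and m: "k * k \<le> m" and c: "1 \<le> c" "c \<le> k - 1" and c': "1 \<le> c'" "c' \<le> k - 1"
    and lt: "c < c'" and E': "E' \<ge> 1"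
    and mx: "Fv k m c 1 * E = Fv k m c' 1 * E'" and mn: "Fv k m c k * E = Fv k m c' k * E'"
  shows False
proof -
  have "Fv k m c k < Fv k m c' k" unfolding Fv_k[OF k]
    using k c c' lt by (intro choose_mono_top) auto
  then have "E' < E"
  proof -
    assume a: "Fv k m c k < Fv k m c' k"
    show "E' < E"
    proof (rule ccontr)
      assume "\<not> E' < E"
      then have "E \<le> E'" by simp
      then have "Fv k m c k * E \<le> Fv k m c k * E'" by simp
      also have "\<dots> < Fv k m c' k * E'" using a E' by simp
      finally show False using mn by simp
    qed
  qed
  moreover have "Fv k m c' 1 < Fv k m c 1" unfolding Fv_1[OF k]
    using k c c' lt by (intro choose_mono_top) auto
  ultimately have "Fv k m c' 1 * E' < Fv k m c 1 * E"
    by (intro mult_strict_mono) auto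
  then show False using mx by simp
qed

lemma main_up:
  fixes q q' :: "nat list"
  assumes k: "k \<ge> 3" and pq: "is_pattern k q" and pq': "is_pattern k q'"
    and up: "q ! 0 < q ! (k - 1)" and up': "q' ! 0 < q' ! (k - 1)"
    and ss: "super_strongly_cfw_equiv k q q'"
  shows "q = q'"
proof -
  define m where "m = k * k"
  have m1: "m \<ge> 1" and mk: "k * k \<le> m" using k unfolding m_def by auto
  define c where "c = q ! 0"
  define c' where "c' = q' ! 0"
  define E where "E = EE k m q"
  define E' where "E' = EE k m q'"
  have c: "1 \<le> c" "c \<le> k - 1" using c_range[OF k pq up] unfolding c_def by auto
  have c': "1 \<le> c'" "c' \<le> k - 1" using c_range[OF k pq' up'] unfolding c'_def by auto
  have E1: "E \<ge> 1" unfolding E_def by (rule EE_pos[OF k m1 pq])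
  have E1': "E' \<ge> 1" unfolding E'_def by (rule EE_pos[OF k m1 pq'])
  have eq: "Fv k m c (q ! j) * E = Fv k m c' (q' ! j) * E'" if "j < k" for j
    using cnt_link[OF ss k that m1 pq pq' up up'] unfolding c_def c'_def E_def E'_def .
  have qv: "1 \<le> q ! j" "q ! j \<le> k" if "j < k" for j using pattern_vals[OF pq that] by auto
  have qv': "1 \<le> q' ! j" "q' ! j \<le> k" if "j < k" for j using pattern_vals[OF pq' that] by auto
  obtain j1 where j1: "j1 < k" "q ! j1 = 1" using pat_surj[OF pq, of 1] k by auto
  obtain j1' where j1': "j1' < k" "q' ! j1' = 1" using pat_surj[OF pq', of 1] k by auto
  obtain jk where jk: "jk < k" "q ! jk = k" using pat_surj[OF pq, of k] k by auto
  obtain jk' where jk': "jk' < k" "q' ! jk' = k" using pat_surj[OF pq', of k] k by auto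
  have mx: "Fv k m c 1 * E = Fv k m c' 1 * E'"
  proof (rule antisym)
    have "Fv k m c 1 * E = Fv k m c' (q' ! j1) * E'" using eq[OF j1(1)] j1(2) by simp
    also have "\<dots> \<le> Fv k m c' 1 * E'" using Fv_le1[OF k c' mk qv'[OF j1(1)]] by simp
    finally show "Fv k m c 1 * E \<le> Fv k m c' 1 * E'" .
    have "Fv k m c' 1 * E' = Fv k m c (q ! j1') * E" using eq[OF j1'(1)] j1'(2) by simp
    also have "\<dots> \<le> Fv k m c 1 * E" using Fv_le1[OF k c mk qv[OF j1'(1)]] by simp
    finally show "Fv k m c' 1 * E' \<le> Fv k m c 1 * E" .
  qed
  have mn: "Fv k m c k * E = Fv k m c' k * E'"
  proof (rule antisym)
    have "Fv k m c k * E \<le> Fv k m c (q ! jk') * E" using Fv_gek[OF k c mk qv[OF jk'(1)]] by simp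
    also have "\<dots> = Fv k m c' k * E'" using eq[OF jk'(1)] jk'(2) by simp
    finally show "Fv k m c k * E \<le> Fv k m c' k * E'" .
    have "Fv k m c' k * E' \<le> Fv k m c' (q' ! jk) * E'" using Fv_gek[OF k c' mk qv'[OF jk(1)]] by simp
    also have "\<dots> = Fv k m c k * E" using eq[OF jk(1)] jk(2) by simp
    finally show "Fv k m c' k * E' \<le> Fv k m c k * E" .
  qed
  have cc: "c = c'"
  proof (rule ccontr)
    assume "c \<noteq> c'"
    then consider "c < c'" | "c' < c" by linarith
    then show False
    proof cases
      case 1 then show False using cmp_false[OF k mk c c' 1 E1' mx mn] by simp
    next
      case 2 then show False using cmp_false[OF k mk c' c 2 E1 mx[symmetric] mn[symmetric]] by simp
    qed
  qed
  have Fk0: "Fv k m c k > 0" unfolding Fv_k[OF k] by simp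
  have EE': "E = E'" using mn Fk0 unfolding cc by simp
  have "q ! j = q' ! j" if "j < k" for j
  proof -
    have "Fv k m c (q ! j) = Fv k m c (q' ! j)" using eq[OF that] E1 unfolding cc EE' by simp
    then show ?thesis using Fv_inj[OF k c mk qv[OF that] qv'[OF that]] by simp
  qed
  then show ?thesis using pat_len[OF pq] pat_len[OF pq'] by (intro nth_equalityI) auto
qed



lemma small_patterns:
  assumes pq: "is_pattern k q" and k: "k \<le> 2"
  shows "q = [] \<or> q = [1] \<or> (k = 2 \<and> (q = [1,2] \<or> q = [2,1]))"
proof -
  have lq: "length q = k" by (rule pat_len[OF pq])
  consider "k = 0" | "k = 1" | "k = 2" using k by linarith
  then show ?thesis
  proof cases
    case 1 then show ?thesis using lq by simp
  next
    case 2
    have q: "q = [q ! 0]"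
    proof (rule nth_equalityI)
      show "length q = length [q ! 0]" using lq 2 by simp
      fix i assume "i < length q"
      then have "i = 0" using lq 2 by simp
      then show "q ! i = [q ! 0] ! i" by simp
    qed
    have "q ! 0 \<in> {1..k}" using pattern_vals[OF pq, of 0] 2 by simp
    then have "q ! 0 = 1" using 2 by simp
    then show ?thesis using q by simp
  next
    case 3
    have q: "q = [q ! 0, q ! 1]"
    proof (rule nth_equalityI)
      show "length q = length [q ! 0, q ! 1]" using lq 3 by simp
      fix i assume "i < length q"
      then have "i = 0 \<or> i = 1" using lq 3 by auto
      then show "q ! i = [q ! 0, q ! 1] ! i" by auto
    qed
    have v: "q ! 0 \<in> {1..k}" "q ! 1 \<in> {1..k}" using pattern_vals[OF pq] 3 by auto
    have ne: "q ! 0 \<noteq> q ! 1" using pat_inj[OF pq, of 0 1] 3 by auto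
    have "(q ! 0 = 1 \<and> q ! 1 = 2) \<or> (q ! 0 = 2 \<and> q ! 1 = 1)" using v ne 3 by auto
    then show ?thesis using q 3 by (metis)
  qed
qed

lemma comp_up:
  assumes k: "k \<ge> 3" and pq: "is_pattern k p" and nup: "\<not> p ! 0 < p ! (k - 1)"
  shows "complement k p ! 0 < complement k p ! (k - 1)"
proof -
  have lp: "length p = k" by (rule pat_len[OF pq])
  have "p ! 0 \<noteq> p ! (k - 1)" using pat_inj[OF pq, of 0 "k - 1"] k by auto
  then have lt: "p ! (k - 1) < p ! 0" using nup by simp
  have "p ! 0 \<in> {1..k}" "p ! (k - 1) \<in> {1..k}" using pattern_vals[OF pq] k by auto
  then show ?thesis using lt lp k unfolding complement_def by auto
qed

theorem theorem1p7:
  fixes k :: nat and p p' :: "nat list"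
  assumes "is_pattern k p" and "is_pattern k p'"
    and "super_strongly_cfw_equiv k p p'"
  shows "p' = p \<or> p' = complement k p"
proof (cases "k \<le> 2")
  case True
  have lp: "length p = k" "length p' = k" using assms(1,2) by (simp_all add: pat_len)
  show ?thesis
  proof (cases "k = 2")
    case k2: True
    have c: "complement k [1,2] = [2,1]" "complement k [2,1] = [1,2]" using k2 unfolding complement_def by simp_all
    have "p = [1,2] \<or> p = [2,1]" using small_patterns[OF assms(1) True] lp k2 by auto
    moreover have "p' = [1,2] \<or> p' = [2,1]" using small_patterns[OF assms(2) True] lp k2 by auto
    ultimately show ?thesis using c by metis
  next
    case False
    then have "p = [] \<or> p = [1]" "p' = [] \<or> p' = [1]"
      using small_patterns[OF assms(1) True] small_patterns[OF assms(2) True] by auto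
    then show ?thesis using lp by auto
  qed
next
  case False
  then have k: "k \<ge> 3" by simp
  define q where "q = (if p ! 0 < p ! (k - 1) then p else complement k p)"
  define q' where "q' = (if p' ! 0 < p' ! (k - 1) then p' else complement k p')"
  have pq: "is_pattern k q" unfolding q_def using assms(1) comp_pattern[OF assms(1)] by simp
  have pq': "is_pattern k q'" unfolding q'_def using assms(2) comp_pattern[OF assms(2)] by simp
  have upq: "q ! 0 < q ! (k - 1)" unfolding q_def using comp_up[OF k assms(1)] by simp
  have upq': "q' ! 0 < q' ! (k - 1)" unfolding q'_def using comp_up[OF k assms(2)] by simp
  have ss1: "super_strongly_cfw_equiv k q p'"
  proof (cases "p ! 0 < p ! (k - 1)")
    case True then show ?thesis unfolding q_def using assms(3) by simp
  next
    case False then show ?thesis unfolding q_def using ss_comp_left[OF assms(1) assms(3)] by simp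
  qed
  have ss2: "super_strongly_cfw_equiv k q' q"
  proof (cases "p' ! 0 < p' ! (k - 1)")
    case True then show ?thesis unfolding q'_def using ss_sym[OF ss1] by simp
  next
    case False then show ?thesis unfolding q'_def using ss_comp_left[OF assms(2) ss_sym[OF ss1]] by simp
  qed
  have qq: "q = q'" by (rule main_up[OF k pq pq' upq upq' ss_sym[OF ss2]])
  have cc: "complement k (complement k p) = p" "complement k (complement k p') = p'"
    using comp_comp[OF assms(1)] comp_comp[OF assms(2)] by auto
  show ?thesis
  proof (cases "p ! 0 < p ! (k - 1)")
    case True
    then have qp: "q = p" unfolding q_def by simp
    show ?thesis
    proof (cases "p' ! 0 < p' ! (k - 1)")
      case True
      then have "q' = p'" unfolding q'_def by simp
      then show ?thesis using qq qp by simp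
    next
      case False
      then have "q' = complement k p'" unfolding q'_def by simp
      then have "complement k p' = p" using qq qp by simp
      then have "complement k (complement k p') = complement k p" by simp
      then show ?thesis using cc by simp
    qed
  next
    case False
    then have qp: "q = complement k p" unfolding q_def by simp
    show ?thesis
    proof (cases "p' ! 0 < p' ! (k - 1)")
      case True
      then have "q' = p'" unfolding q'_def by simp
      then show ?thesis using qq qp by simp
    next
      case False
      then have "q' = complement k p'" unfolding q'_def by simp
      then have "complement k p' = complement k p" using qq qp by simp
      then have "complement k (complement k p') = complement k (complement k p)" by simp
      then show ?thesis using cc by simp
    qed
  qed
qed


end
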